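(* Let $G$ be a graph and let $x,y\in V(G)$ be distinct vertices such that $N[x]\cup N[y]=V(G)$ and $d(x)\ge d(y)$. If $d(x)\ge 4$ or $N(x)\cap N[y]\ne\emptyset$, then $G$ admits an antimagic orientation.
   Context: All graphs are finite and simple; $N(v)$ denotes the set of neighbours of $v$, $N[v]=N(v)\cup\{v\}$, and $d(v)$ the degree of $v$. For a digraph $D$ and an injective map $\tau$ from the arc set $A(D)$ to positive integers, $s_{(D,\tau)}(u)$ is the sum of labels of arcs entering $u$ minus the sum of labels of arcs leaving $u$ ($0$ if $u$ is isolated). If $D$ has $m$ arcs, a bijection $\tau:A(D)\to\{1,\dots,m\}$ is an antimagic labeling if the values $s_{(D,\tau)}(u)$ are pairwise distinct over all vertices. $G$ admits an antimagic orientation if some orientation $D$ of $G$ has an antimagic labeling. *)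

theory Defs
  imports Main
begin

definition simple_graph :: "'a set \<Rightarrow> 'a set set \<Rightarrow> bool" where
  "simple_graph V E \<longleftrightarrow> finite V \<and>
     (\<forall>e\<in>E. \<exists>u v. e = {u, v} \<and> u \<noteq> v \<and> u \<in> V \<and> v \<in> V)"

definition nbhd :: "'a set set \<Rightarrow> 'a \<Rightarrow> 'a set" where
  "nbhd E v = {u. {u, v} \<in> E}"

definition closed_nbhd :: "'a set set \<Rightarrow> 'a \<Rightarrow> 'a set" where
  "closed_nbhd E v = insert v (nbhd E v)"

definition degree :: "'a set set \<Rightarrow> 'a \<Rightarrow> nat" where
  "degree E v = card (nbhd E v)"

definition is_orientation :: "'a set set \<Rightarrow> ('a \<times> 'a) set \<Rightarrow> bool" where
  "is_orientation E D \<longleftrightarrow> bij_betw (\<lambda>(u, v). {u, v}) D E"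

definition vertex_sum :: "('a \<times> 'a) set \<Rightarrow> ('a \<times> 'a \<Rightarrow> nat) \<Rightarrow> 'a \<Rightarrow> int" where
  "vertex_sum D \<tau> u =
     (\<Sum>a\<in>{a\<in>D. snd a = u}. int (\<tau> a)) - (\<Sum>a\<in>{a\<in>D. fst a = u}. int (\<tau> a))"

definition antimagic_labeling :: "'a set \<Rightarrow> ('a \<times> 'a) set \<Rightarrow> ('a \<times> 'a \<Rightarrow> nat) \<Rightarrow> bool" where
  "antimagic_labeling V D \<tau> \<longleftrightarrow>
     bij_betw \<tau> D {1..card D} \<and> inj_on (vertex_sum D \<tau>) V"

definition has_antimagic_orientation :: "'a set \<Rightarrow> 'a set set \<Rightarrow> bool" where
  "has_antimagic_orientation V E \<longleftrightarrow>
     (\<exists>D \<tau>. is_orientation E D \<and> antimagic_labeling V D \<tau>)"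

end

theory Submission
  imports Defs
begin

definition ev :: "'a set set \<Rightarrow> ('a set \<Rightarrow> 'a) \<Rightarrow> ('a set \<Rightarrow> nat) \<Rightarrow> 'a \<Rightarrow> int" where
  "ev F h l u = (\<Sum>e\<in>F. if u \<in> e then (if h e = u then int (l e) else - int (l e)) else 0)"

definition nv :: "'a set set \<Rightarrow> ('a set \<Rightarrow> 'a) \<Rightarrow> ('a set \<Rightarrow> nat) \<Rightarrow> 'a \<Rightarrow> int" where
  "nv F h l u = (\<Sum>v\<in>nbhd F u. if h {u, v} = u then int (l {u, v}) else - int (l {u, v}))"

definition edges2 :: "'a set set \<Rightarrow> bool" where
  "edges2 F \<longleftrightarrow> (\<forall>e\<in>F. \<exists>u v. e = {u, v} \<and> u \<noteq> v)"

lemma nbhd_finite: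
  assumes "finite F" "edges2 F"
  shows "finite (nbhd F u)"
proof -
  have "nbhd F u \<subseteq> \<Union>F" unfolding nbhd_def by auto
  moreover have "finite (\<Union>F)" using assms unfolding edges2_def
    by (metis (no_types, lifting) finite.emptyI finite.insertI finite_Union)
  ultimately show ?thesis by (rule finite_subset)
qed

lemma nbhd_ne:
  assumes "edges2 F" "v \<in> nbhd F u"
  shows "v \<noteq> u"
proof
  assume "v = u"
  then have "{u} \<in> F" using assms(2) unfolding nbhd_def by simp
  then obtain a b where "{u} = {a, b}" "a \<noteq> b" using assms(1) unfolding edges2_def by blast
  then have "a \<in> {u}" "b \<in> {u}" by auto
  then show False using \<open>a \<noteq> b\<close> by simp
qed

lemma ev_nv:
  assumes fin: "finite F" and e2: "edges2 F"
  shows "ev F h l u = nv F h l u"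
proof -
  let ?g = "\<lambda>e. if h e = u then int (l e) else - int (l e)"
  have "ev F h l u = (\<Sum>e\<in>{e\<in>F. u \<in> e}. ?g e)"
    unfolding ev_def using fin by (simp add: sum.inter_filter)
  also have "{e\<in>F. u \<in> e} = (\<lambda>v. {u, v}) ` nbhd F u"
  proof
    show "{e \<in> F. u \<in> e} \<subseteq> (\<lambda>v. {u, v}) ` nbhd F u"
    proof
      fix e assume "e \<in> {e \<in> F. u \<in> e}"
      then have eF: "e \<in> F" and ue: "u \<in> e" by auto
      then obtain a b where ab: "e = {a, b}" "a \<noteq> b" using e2 unfolding edges2_def by blast
      show "e \<in> (\<lambda>v. {u, v}) ` nbhd F u"
      proof (cases "u = a")
        case True
        then have "e = {u, b}" using ab by simp
        moreover have "b \<in> nbhd F u" unfolding nbhd_def using eF ab True by (simp add: insert_commute)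
        ultimately show ?thesis by blast
      next
        case False
        then have "u = b" using ue ab by auto
        then have "e = {u, a}" using ab by (simp add: insert_commute)
        moreover have "a \<in> nbhd F u" unfolding nbhd_def using eF ab \<open>u = b\<close> by simp
        ultimately show ?thesis by blast
      qed
    qed
  next
    show "(\<lambda>v. {u, v}) ` nbhd F u \<subseteq> {e \<in> F. u \<in> e}"
      unfolding nbhd_def by (auto simp: insert_commute)
  qed
  also have "(\<Sum>e\<in>(\<lambda>v. {u, v}) ` nbhd F u. ?g e) = (\<Sum>v\<in>nbhd F u. ?g {u, v})"
  proof (rule sum.reindex[unfolded comp_def])
    show "inj_on (\<lambda>v. {u, v}) (nbhd F u)"
    proof (rule inj_onI)
      fix v w assume "v \<in> nbhd F u" "w \<in> nbhd F u" "{u, v} = {u, w}"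
      moreover have "v \<noteq> u" using \<open>v \<in> nbhd F u\<close> e2 nbhd_ne by metis
      moreover have "w \<noteq> u" using \<open>w \<in> nbhd F u\<close> e2 nbhd_ne by metis
      ultimately show "v = w" by (metis doubleton_eq_iff)
    qed
  qed
  finally show ?thesis unfolding nv_def by simp
qed

definition otherv :: "('a set \<Rightarrow> 'a) \<Rightarrow> 'a set \<Rightarrow> 'a" where
  "otherv h e = (SOME v. v \<in> e \<and> v \<noteq> h e)"

lemma otherv_props:
  assumes "e = {a, b}" "a \<noteq> b" "h e \<in> e"
  shows "otherv h e \<in> e" "otherv h e \<noteq> h e" "{otherv h e, h e} = e"
proof -
  have ex: "\<exists>v. v \<in> e \<and> v \<noteq> h e" using assms by auto
  have *: "otherv h e \<in> e \<and> otherv h e \<noteq> h e"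
    unfolding otherv_def by (rule someI_ex[OF ex])
  then show "otherv h e \<in> e" "otherv h e \<noteq> h e" by auto
  have "(otherv h e = a \<and> h e = b) \<or> (otherv h e = b \<and> h e = a)" proof -
    have "otherv h e \<in> {a, b}" "h e \<in> {a, b}" using * assms(1,3) by auto
    then show ?thesis using * by auto
  qed
  then have "{otherv h e, h e} = {a, b}"
  proof
    assume c: "otherv h e = a \<and> h e = b"
    show ?thesis by (simp only: c[THEN conjunct1] c[THEN conjunct2])
  next
    assume c: "otherv h e = b \<and> h e = a"
    show ?thesis by (simp only: c[THEN conjunct1] c[THEN conjunct2] insert_commute)
  qed
  then show "{otherv h e, h e} = e" by (rule trans[OF _ assms(1)[symmetric]])
qed

lemma antimagic_from_ev:
  assumes fin: "finite E" and e2: "edges2 E" and hE: "\<forall>e\<in>E. h e \<in> e"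
    and bl: "bij_betw l E {1..card E}" and inj: "inj_on (ev E h l) V"
  shows "has_antimagic_orientation V E"
proof -
  define arc where "arc e = (otherv h e, h e)" for e
  define D where "D = arc ` E"
  define \<tau> where "\<tau> a = l {fst a, snd a}" for a
  have ep: "otherv h e \<in> e \<and> otherv h e \<noteq> h e \<and> {otherv h e, h e} = e" if "e \<in> E" for e
  proof -
    have "\<exists>a b. e = {a, b} \<and> a \<noteq> b" using e2 that unfolding edges2_def by (rule bspec)
    then obtain a b where ab: "e = {a, b}" "a \<noteq> b" by (elim exE conjE)
    have "h e \<in> e" using hE that by blast
    note o = otherv_props[of e a b h, OF ab this]
    show ?thesis by (intro conjI o)
  qed
  have ep1: "h e \<in> e" if "e \<in> E" for e using hE that by blast
  have ep5: "(u \<in> e) = (u = h e \<or> u = otherv h e)" if "e \<in> E" for e u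
  proof -
    have "(u \<in> {otherv h e, h e}) = (u = h e \<or> u = otherv h e)" by blast
    then show ?thesis using ep[OF that] by simp
  qed
  have pe: "(case arc e of (u, v) \<Rightarrow> {u, v}) = e" if "e \<in> E" for e
    using ep[OF that] unfolding arc_def by simp
  have bij1: "bij_betw (\<lambda>(u, v). {u, v}) D E"
  proof (rule bij_betw_byWitness[where f' = arc])
    show "\<forall>a\<in>D. arc (case a of (u, v) \<Rightarrow> {u, v}) = a"
    proof
      fix a assume "a \<in> D"
      then obtain e where "e \<in> E" "a = arc e" unfolding D_def by blast
      then show "arc (case a of (u, v) \<Rightarrow> {u, v}) = a" using pe[of e] by simp
    qed
    show "\<forall>a'\<in>E. (case arc a' of (u, v) \<Rightarrow> {u, v}) = a'"
      by (intro ballI pe)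
    show "(\<lambda>(u, v). {u, v}) ` D \<subseteq> E"
    proof
      fix z assume "z \<in> (\<lambda>(u, v). {u, v}) ` D"
      then obtain e where "e \<in> E" "z = (case arc e of (u, v) \<Rightarrow> {u, v})" unfolding D_def by blast
      then show "z \<in> E" using pe[of e] by simp
    qed
    show "arc ` E \<subseteq> D" unfolding D_def by auto
  qed
  have injarc: "inj_on arc E"
  proof (rule inj_onI)
    fix e1 e2 assume "e1 \<in> E" "e2 \<in> E" "arc e1 = arc e2"
    then have "(case arc e1 of (u, v) \<Rightarrow> {u, v}) = (case arc e2 of (u, v) \<Rightarrow> {u, v})" by simp
    then show "e1 = e2" using pe[of e1] pe[of e2] \<open>e1 \<in> E\<close> \<open>e2 \<in> E\<close> by simp
  qed
  have cardD: "card D = card E" unfolding D_def using injarc by (simp add: card_image)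
  have bt: "bij_betw \<tau> D {1..card D}"
  proof -
    have "bij_betw (l \<circ> (\<lambda>(u, v). {u, v})) D {1..card E}"
      by (rule bij_betw_trans[OF bij1 bl])
    moreover have "l \<circ> (\<lambda>(u, v). {u, v}) = \<tau>" unfolding \<tau>_def by (auto simp: fun_eq_iff)
    ultimately show ?thesis using cardD by simp
  qed
  have vs: "vertex_sum D \<tau> u = ev E h l u" for u
  proof -
    have s1: "(\<Sum>a\<in>{a\<in>D. snd a = u}. int (\<tau> a)) = (\<Sum>e\<in>{e\<in>E. h e = u}. int (l e))"
    proof -
      have "{a\<in>D. snd a = u} = arc ` {e\<in>E. h e = u}" unfolding D_def arc_def by auto
      moreover have "inj_on arc {e\<in>E. h e = u}" using injarc by (rule inj_on_subset) auto
      ultimately have "(\<Sum>a\<in>{a\<in>D. snd a = u}. int (\<tau> a)) = (\<Sum>e\<in>{e\<in>E. h e = u}. int (\<tau> (arc e)))"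
        by (simp add: sum.reindex)
      also have "\<dots> = (\<Sum>e\<in>{e\<in>E. h e = u}. int (l e))"
      proof (rule sum.cong)
        fix e assume "e \<in> {e\<in>E. h e = u}"
        then have "e \<in> E" by simp
        show "int (\<tau> (arc e)) = int (l e)" unfolding \<tau>_def arc_def using ep[OF \<open>e \<in> E\<close>] by simp
      qed simp
      finally show ?thesis .
    qed
    have s2: "(\<Sum>a\<in>{a\<in>D. fst a = u}. int (\<tau> a)) = (\<Sum>e\<in>{e\<in>E. otherv h e = u}. int (l e))"
    proof -
      have "{a\<in>D. fst a = u} = arc ` {e\<in>E. otherv h e = u}" unfolding D_def arc_def by auto
      moreover have "inj_on arc {e\<in>E. otherv h e = u}" using injarc by (rule inj_on_subset) auto
      ultimately have "(\<Sum>a\<in>{a\<in>D. fst a = u}. int (\<tau> a)) = (\<Sum>e\<in>{e\<in>E. otherv h e = u}. int (\<tau> (arc e)))"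
        by (simp add: sum.reindex)
      also have "\<dots> = (\<Sum>e\<in>{e\<in>E. otherv h e = u}. int (l e))"
      proof (rule sum.cong)
        fix e assume "e \<in> {e\<in>E. otherv h e = u}"
        then have "e \<in> E" by simp
        show "int (\<tau> (arc e)) = int (l e)" unfolding \<tau>_def arc_def using ep[OF \<open>e \<in> E\<close>] by simp
      qed simp
      finally show ?thesis .
    qed
    have "ev E h l u = (\<Sum>e\<in>E. (if h e = u then int (l e) else 0) - (if otherv h e = u then int (l e) else 0))"
      unfolding ev_def
    proof (rule sum.cong)
      fix e assume "e \<in> E"
      from ep[OF this] ep5[OF this, of u] show "(if u \<in> e then if h e = u then int (l e) else - int (l e) else 0) =
          (if h e = u then int (l e) else 0) - (if otherv h e = u then int (l e) else 0)"
        by auto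
    qed simp
    also have "\<dots> = (\<Sum>e\<in>E. if h e = u then int (l e) else 0) - (\<Sum>e\<in>E. if otherv h e = u then int (l e) else 0)"
      by (simp add: sum_subtractf)
    also have "\<dots> = (\<Sum>e\<in>{e\<in>E. h e = u}. int (l e)) - (\<Sum>e\<in>{e\<in>E. otherv h e = u}. int (l e))"
      using fin by (simp add: sum.inter_filter)
    finally show ?thesis unfolding vertex_sum_def using s1 s2 by simp
  qed
  have "is_orientation E D" unfolding is_orientation_def using bij1 .
  moreover have "antimagic_labeling V D \<tau>"
    unfolding antimagic_labeling_def using bt inj vs by (simp add: inj_on_def)
  ultimately show ?thesis unfolding has_antimagic_orientation_def by blast
qed

lemma sort_lemma:
  fixes \<kappa> :: "'a \<Rightarrow> int" and Q :: "nat set"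
  assumes "finite W" "finite Q" "card Q = card W"
  shows "\<exists>p. bij_betw p W Q \<and> (\<forall>u\<in>W. \<forall>v\<in>W. \<kappa> u > \<kappa> v \<longrightarrow> p u < p v)"
  using assms
proof (induction "card W" arbitrary: W Q)
  case 0
  then have "W = {}" "Q = {}" by auto
  then show ?case by (simp add: bij_betw_def)
next
  case (Suc n)
  then have "W \<noteq> {}" by auto
  obtain w where w: "w \<in> W" "\<forall>u\<in>W. \<kappa> w \<le> \<kappa> u"
  proof -
    have "finite (\<kappa> ` W)" "\<kappa> ` W \<noteq> {}" using Suc.prems \<open>W \<noteq> {}\<close> by auto
    then have "Min (\<kappa> ` W) \<in> \<kappa> ` W" by (rule Min_in)
    then obtain w where "w \<in> W" "\<kappa> w = Min (\<kappa> ` W)" by auto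
    moreover have "\<forall>u\<in>W. \<kappa> w \<le> \<kappa> u" using calculation \<open>finite (\<kappa> ` W)\<close> by simp
    ultimately show ?thesis using that by blast
  qed
  have "Q \<noteq> {}" using Suc by auto
  define q where "q = Max Q"
  have q: "q \<in> Q" "\<forall>r\<in>Q. r \<le> q" unfolding q_def using Suc.prems \<open>Q \<noteq> {}\<close> by auto
  have "n = card (W - {w})" using Suc w by simp
  moreover have "card (Q - {q}) = card (W - {w})" using Suc w q by simp
  ultimately have "\<exists>p. bij_betw p (W - {w}) (Q - {q}) \<and>
    (\<forall>u\<in>W - {w}. \<forall>v\<in>W - {w}. \<kappa> u > \<kappa> v \<longrightarrow> p u < p v)"
    using Suc.prems by (intro Suc.hyps) auto
  then obtain p where p: "bij_betw p (W - {w}) (Q - {q})"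
    "\<forall>u\<in>W - {w}. \<forall>v\<in>W - {w}. \<kappa> u > \<kappa> v \<longrightarrow> p u < p v" by blast
  define p' where "p' = p(w := q)"
  have "bij_betw p' (W - {w}) (Q - {q})"
    using p(1) unfolding p'_def by (rule bij_betw_cong[THEN iffD1, rotated]) auto
  then have "bij_betw p' ((W - {w}) \<union> {w}) ((Q - {q}) \<union> {p' w})"
    by (intro notIn_Un_bij_betw) (auto simp: p'_def)
  moreover have "(W - {w}) \<union> {w} = W" "(Q - {q}) \<union> {p' w} = Q" using w q by (auto simp: p'_def)
  ultimately have b: "bij_betw p' W Q" by simp
  have "p' u < p' v" if "u \<in> W" "v \<in> W" "\<kappa> u > \<kappa> v" for u v
  proof -
    have "u \<noteq> w" using w that by force
    show ?thesis
    proof (cases "v = w")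
      case True
      have "p u \<in> Q - {q}" using p(1) that \<open>u \<noteq> w\<close> by (auto simp: bij_betw_def)
      then have "p u < q" using q by force
      then show ?thesis using True \<open>u \<noteq> w\<close> by (simp add: p'_def)
    next
      case False
      then show ?thesis using p(2) that \<open>u \<noteq> w\<close> by (simp add: p'_def)
    qed
  qed
  then show ?case using b by blast
qed

definition is_path :: "'a set set \<Rightarrow> 'a list \<Rightarrow> bool" where
  "is_path F ps \<longleftrightarrow> distinct ps \<and> (\<forall>i. Suc i < length ps \<longrightarrow> {ps!i, ps!Suc i} \<in> F)"

lemma path_set_sub:
  assumes "is_path F ps" "2 \<le> length ps"
  shows "set ps \<subseteq> \<Union>F"
proof
  fix z assume "z \<in> set ps"
  then obtain i where i: "i < length ps" "ps!i = z" by (auto simp: in_set_conv_nth)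
  show "z \<in> \<Union>F"
  proof (cases "Suc i < length ps")
    case True
    then have "{ps!i, ps!Suc i} \<in> F" using assms unfolding is_path_def by blast
    then show ?thesis using i by blast
  next
    case False
    then have "i = Suc (i - 1)" "Suc (i - 1) < length ps" using i assms by auto
    then have "{ps!(i-1), ps!i} \<in> F" using assms unfolding is_path_def by metis
    then show ?thesis using i by blast
  qed
qed

lemma edge_obtain:
  assumes "edges2 F" "e \<in> F"
  obtains a b where "e = {a, b}" "a \<noteq> b"
proof -
  have "\<exists>a b. e = {a, b} \<and> a \<noteq> b" using assms unfolding edges2_def by (rule bspec)
  then show ?thesis using that by (elim exE conjE)
qed

lemma mod_Suc_cases: "(j::nat) < r \<Longrightarrow> Suc j mod r = (if Suc j = r then 0 else Suc j)"
  by auto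

lemma leaf_or_cycle:
  assumes fin: "finite F" and e2: "edges2 F" and ne: "F \<noteq> {}"
  shows "(\<exists>e\<in>F. \<exists>v\<in>e. \<forall>e'\<in>F. v \<in> e' \<longrightarrow> e' = e) \<or>
         (\<exists>cs. distinct cs \<and> 3 \<le> length cs \<and> (\<forall>j<length cs. {cs!j, cs!(Suc j mod length cs)} \<in> F))"
proof -
  obtain e0 where "e0 \<in> F" using ne by blast
  then obtain a b where ab: "e0 = {a, b}" "a \<noteq> b" by (rule edge_obtain[OF e2])
  have finU: "finite (\<Union>F)" using fin e2 unfolding edges2_def
    by (metis (no_types, lifting) finite.emptyI finite.insertI finite_Union)
  define P where "P ps \<longleftrightarrow> is_path F ps \<and> 2 \<le> length ps" for ps
  have P0: "P [a, b]" unfolding P_def is_path_def using ab \<open>e0 \<in> F\<close> by (auto simp: nth_Cons')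
  have bound: "\<forall>ps. P ps \<longrightarrow> length ps < card (\<Union>F) + 1"
  proof (intro allI impI)
    fix ps assume "P ps"
    then have "set ps \<subseteq> \<Union>F" using path_set_sub unfolding P_def by blast
    have "distinct ps" using \<open>P ps\<close> unfolding P_def is_path_def by simp
    have "card (set ps) \<le> card (\<Union>F)" using finU \<open>set ps \<subseteq> \<Union>F\<close> by (simp add: card_mono)
    then show "length ps < card (\<Union>F) + 1" using \<open>distinct ps\<close> by (simp add: distinct_card)
  qed
  obtain ps where ps: "P ps" and maxps: "\<forall>qs. P qs \<longrightarrow> length qs \<le> length ps"
    using ex_has_greatest_nat[of P "[a, b]" length "card (\<Union>F) + 1", OF P0 bound] by blast
  define n where "n = length ps"
  have n2: "2 \<le> n" using ps unfolding P_def n_def by simp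
  have dps: "distinct ps" using ps unfolding P_def is_path_def by simp
  have pF: "{ps!i, ps!Suc i} \<in> F" if "Suc i < n" for i using ps that unfolding P_def is_path_def n_def by blast
  define v where "v = ps!(n-1)"
  define u where "u = ps!(n-2)"
  have uvF: "{u, v} \<in> F" using pF[of "n-2"] n2 unfolding u_def v_def by (simp add: Suc_diff_Suc numeral_2_eq_2)
  have nbr: "\<exists>w. e' = {v, w} \<and> w \<noteq> v \<and> w \<in> set ps" if ef: "e' \<in> F" and ve: "v \<in> e'" for e'
  proof -
    obtain c d where cd: "e' = {c, d}" "c \<noteq> d" by (rule edge_obtain[OF e2 ef])
    obtain w where w: "e' = {v, w}" "w \<noteq> v"
    proof (cases "c = v")
      case True
      show ?thesis by (rule that[of d]) (use cd True in simp_all)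
    next
      case False
      have "v \<in> {c, d}" using cd(1) \<open>v \<in> e'\<close> by simp
      then have "d = v" using False by simp
      then have "e' = {v, c}" using cd by (simp add: insert_commute)
      then show ?thesis using that False by simp
    qed
    have "w \<in> set ps"
    proof (rule ccontr)
      assume nw: "w \<notin> set ps"
      have "P (ps @ [w])"
        unfolding P_def is_path_def
      proof (intro conjI allI impI)
        show "distinct (ps @ [w])" using dps nw by simp
        show "2 \<le> length (ps @ [w])" using n2 n_def by simp
        fix i assume i: "Suc i < length (ps @ [w])"
        show "{(ps @ [w]) ! i, (ps @ [w]) ! Suc i} \<in> F"
        proof (cases "Suc i < n")
          case True
          then show ?thesis using pF[OF True] by (simp add: nth_append n_def)
        next
          case False
          then have "i = n - 1" "Suc i = n" using i n_def by auto
          then have "(ps @ [w]) ! i = v" "(ps @ [w]) ! Suc i = w"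
            using n2 by (simp_all add: nth_append n_def v_def)
          then show ?thesis using w ef by simp
        qed
      qed
      then have "length (ps @ [w]) \<le> length ps" using maxps by blast
      then show False by simp
    qed
    then show ?thesis using w by blast
  qed
  show ?thesis
  proof (cases "\<forall>e'\<in>F. v \<in> e' \<longrightarrow> e' = {u, v}")
    case True
    then show ?thesis using uvF by blast
  next
    case False
    then obtain e' where e': "e' \<in> F" "v \<in> e'" "e' \<noteq> {u, v}" by blast
    then obtain w where w: "e' = {v, w}" "w \<noteq> v" "w \<in> set ps" using nbr by blast
    then obtain i where i: "i < n" "ps!i = w" by (auto simp: in_set_conv_nth n_def)
    have "i \<noteq> n - 1" using i w unfolding v_def by auto
    moreover have "i \<noteq> n - 2"
    proof
      assume "i = n - 2"
      then have "w = u" using i unfolding u_def by simp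
      then show False using e' w by (simp add: insert_commute)
    qed
    ultimately have i3: "i + 3 \<le> n" using i by linarith
    define cs where "cs = drop i ps"
    have lcs: "length cs = n - i" unfolding cs_def n_def by simp
    have ncs: "cs!j = ps!(i + j)" if "j < length cs" for j using that unfolding cs_def by simp
    have "distinct cs" unfolding cs_def using dps by simp
    moreover have "3 \<le> length cs" using lcs i3 by simp
    moreover have "\<forall>j<length cs. {cs!j, cs!(Suc j mod length cs)} \<in> F"
    proof (intro allI impI)
      fix j assume j: "j < length cs"
      show "{cs!j, cs!(Suc j mod length cs)} \<in> F"
      proof (cases "Suc j = length cs")
        case True
        then have "cs!(Suc j mod length cs) = w" using ncs[of 0] i lcs by simp
        moreover have "i + j = n - 1" using True lcs i3 by simp
        then have "cs!j = v" using ncs[OF j] unfolding v_def by simp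
        ultimately show ?thesis using w e' by simp
      next
        case False
        then have "Suc j < length cs" using j by simp
        then have "Suc j mod length cs = Suc j" by simp
        moreover have "{ps!(i+j), ps!Suc (i+j)} \<in> F" using pF \<open>Suc j < length cs\<close> lcs by simp
        ultimately show ?thesis using ncs[OF j] ncs[OF \<open>Suc j < length cs\<close>] by simp
      qed
    qed
    ultimately show ?thesis by blast
  qed
qed

lemma ev_union:
  assumes "finite A" "finite B" "A \<inter> B = {}"
  shows "ev (A \<union> B) h l u = ev A h l u + ev B h l u"
  unfolding ev_def using assms by (rule sum.union_disjoint)

lemma ev_cong:
  assumes "\<forall>e\<in>A. h e = h' e \<and> l e = l' e"
  shows "ev A h l u = ev A h' l' u"
  unfolding ev_def using assms by (intro sum.cong) auto

lemma ev_zero: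
  assumes "\<forall>e\<in>A. u \<notin> e"
  shows "ev A h l u = 0"
  unfolding ev_def using assms by (intro sum.neutral) auto

lemma edges2_subset: "edges2 F \<Longrightarrow> G \<subseteq> F \<Longrightarrow> edges2 G"
  unfolding edges2_def by blast

lemma one_sided:
  assumes "finite F" "edges2 F"
  shows "\<exists>h l. (\<forall>e\<in>F. h e \<in> e) \<and> bij_betw l F {1..card F} \<and> (\<forall>u. ev F h l u \<le> int (card F))"
  using assms
proof (induction "card F" arbitrary: F rule: less_induct)
  case less
  note fin = less.prems(1) and e2 = less.prems(2)
  define n where "n = card F"
  show ?case
  proof (cases "F = {}")
    case True
    then show ?thesis by (auto simp: ev_def bij_betw_def)
  next
    case False
    from leaf_or_cycle[OF fin e2 False] show ?thesis
    proof
      assume "\<exists>e\<in>F. \<exists>v\<in>e. \<forall>e'\<in>F. v \<in> e' \<longrightarrow> e' = e"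
      then obtain e v where ev: "e \<in> F" "v \<in> e" "\<forall>e'\<in>F. v \<in> e' \<longrightarrow> e' = e" by (elim bexE)
      define F' where "F' = F - {e}"
      have "0 < card F" using ev(1) fin card_gt_0_iff by blast
      then have cF': "card F' = n - 1" "card F' < card F" unfolding F'_def n_def using ev(1) fin
        by (auto simp: card_Diff_singleton)
      have "finite F'" "edges2 F'" unfolding F'_def using fin edges2_subset[OF e2] by auto
      then obtain h' l' where IH: "\<forall>e\<in>F'. h' e \<in> e" "bij_betw l' F' {1..card F'}"
        "\<forall>u. ev F' h' l' u \<le> int (card F')"
        using less.hyps[OF cF'(2)] by blast
      define h where "h = h'(e := v)"
      define l where "l = l'(e := n)"
      have eF': "e \<notin> F'" unfolding F'_def by simp
      have n1: "1 \<le> n" using \<open>0 < card F\<close> unfolding n_def by simp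
      have "\<forall>e\<in>F. h e \<in> e" using IH(1) ev(1,2) unfolding h_def F'_def by auto
      moreover have "bij_betw l F {1..card F}"
      proof -
        have "bij_betw l F' {1..n-1} = bij_betw l' F' {1..n-1}"
          by (rule bij_betw_cong) (use eF' in \<open>auto simp: l_def\<close>)
        then have "bij_betw l F' {1..n-1}" using IH(2) cF' by simp
        then have "bij_betw l (F' \<union> {e}) ({1..n-1} \<union> {l e})"
          by (intro notIn_Un_bij_betw) (auto simp: l_def eF')
        moreover have "F' \<union> {e} = F" unfolding F'_def using ev(1) by auto
        moreover have "{1..n-1} \<union> {l e} = {1..n}" using n1 by (auto simp: l_def)
        ultimately show ?thesis unfolding n_def by simp
      qed
      moreover have "ev F h l u \<le> int (card F)" for u
      proof -
        have split: "ev F h l u = ev F' h l u + ev {e} h l u"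
          using ev_union[of F' "{e}" h l u] \<open>finite F'\<close> eF' ev(1) unfolding F'_def
          by (simp add: insert_absorb)
        have "ev F' h l u = ev F' h' l' u" using eF' unfolding h_def l_def by (intro ev_cong) auto
        moreover have "ev {e} h l u = (if u \<in> e then if v = u then int n else - int n else 0)"
          unfolding ev_def h_def l_def by simp
        moreover have "ev F' h' l' v = 0"
        proof (rule ev_zero, intro ballI notI)
          fix e' assume a: "e' \<in> F'" and b: "v \<in> e'"
          have "e' = e" by (rule ev(3)[rule_format]) (use a b in \<open>auto simp: F'_def\<close>)
          then show False using a eF' by simp
        qed
        ultimately show ?thesis using split IH(3)[rule_format, of u] cF' n1 unfolding n_def by auto
      qed
      ultimately show ?thesis by blast
    next
      assume "\<exists>cs. distinct cs \<and> 3 \<le> length cs \<and> (\<forall>j<length cs. {cs!j, cs!(Suc j mod length cs)} \<in> F)"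
      then obtain cs where cs: "distinct cs" "3 \<le> length cs" "\<forall>j<length cs. {cs!j, cs!(Suc j mod length cs)} \<in> F"
        by (elim exE conjE)
      define r where "r = length cs"
      define ce where "ce j = {cs!j, cs!(Suc j mod r)}" for j
      have Sr: "Suc j mod r < r" for j using cs(2) unfolding r_def by (intro mod_less_divisor) linarith
      have ms: "Suc j mod r = (if Suc j = r then 0 else Suc j)" if "j < r" for j
        using that by (rule mod_Suc_cases)
      have ce_ne: "cs!j \<noteq> cs!(Suc j mod r)" if "j < r" for j
      proof -
        have "j \<noteq> Suc j mod r" using ms[OF that] cs(2) unfolding r_def by auto
        then show ?thesis using cs(1) that Sr[of j] unfolding r_def by (simp add: nth_eq_iff_index_eq)
      qed
      have inj_ce: "inj_on ce {..<r}"
      proof (rule inj_onI)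
        fix i j assume i: "i \<in> {..<r}" and j: "j \<in> {..<r}" and eq: "ce i = ce j"
        have iff: "(cs!a = cs!b) = (a = b)" if "a < r" "b < r" for a b
          using cs(1) that unfolding r_def by (simp add: nth_eq_iff_index_eq)
        from eq have "(cs!i = cs!j \<and> cs!(Suc i mod r) = cs!(Suc j mod r)) \<or>
                      (cs!i = cs!(Suc j mod r) \<and> cs!(Suc i mod r) = cs!j)"
          unfolding ce_def by (simp add: doubleton_eq_iff)
        then show "i = j"
        proof
          assume "cs!i = cs!j \<and> cs!(Suc i mod r) = cs!(Suc j mod r)"
          then show "i = j" using iff i j by auto
        next
          assume "cs!i = cs!(Suc j mod r) \<and> cs!(Suc i mod r) = cs!j"
          then have e1: "i = Suc j mod r" and e2: "Suc i mod r = j" using iff i j Sr by auto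
          have ir: "i < r" and jr: "j < r" using i j by auto
          have h1: "i = (if Suc j = r then 0 else Suc j)" using e1 ms[OF jr] by simp
          have h2: "(if Suc i = r then 0 else Suc i) = j" using e2 ms[OF ir] by simp
          have r3: "3 \<le> r" using cs(2) unfolding r_def .
          show "i = j"
          proof (cases "Suc j = r")
            case True
            then have "i = 0" using h1 by simp
            then show ?thesis using h2 r3 True by (simp split: if_splits)
          next
            case False
            then have "i = Suc j" using h1 by simp
            then show ?thesis using h2 r3 False by (simp split: if_splits)
          qed
        qed
      qed
      define CE where "CE = ce ` {..<r}"
      have CEF: "CE \<subseteq> F" using cs(3) unfolding CE_def ce_def r_def by auto
      have cCE: "card CE = r" unfolding CE_def using inj_ce by (simp add: card_image)
      define F' where "F' = F - CE"
      have rn: "r \<le> n" using CEF fin cCE unfolding n_def by (metis card_mono)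
      have cF': "card F' = n - r" unfolding F'_def n_def using CEF fin cCE by (simp add: card_Diff_subset finite_subset)
      have "card F' < card F" using cF' rn cs(2) unfolding r_def n_def by simp
      have "finite F'" "edges2 F'" unfolding F'_def using fin edges2_subset[OF e2] by auto
      then obtain h' l' where IH: "\<forall>e\<in>F'. h' e \<in> e" "bij_betw l' F' {1..card F'}"
        "\<forall>u. ev F' h' l' u \<le> int (card F')"
        using less.hyps[OF \<open>card F' < card F\<close>] by blast
      define ix where "ix = the_inv_into {..<r} ce"
      have ixce: "ix (ce j) = j" if "j < r" for j unfolding ix_def using inj_ce that
        by (simp add: the_inv_into_f_f)
      define h where "h e = (if e \<in> CE then cs!(Suc (ix e) mod r) else h' e)" for e
      define l where "l e = (if e \<in> CE then n - r + Suc (ix e) else l' e)" for e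
      have hce: "h (ce j) = cs!(Suc j mod r)" if "j < r" for j
        unfolding h_def CE_def using that ixce by auto
      have lce: "l (ce j) = n - r + Suc j" if "j < r" for j
        unfolding l_def CE_def using that ixce by auto
      have hF': "h e = h' e" "l e = l' e" if "e \<in> F'" for e using that unfolding h_def l_def F'_def by auto
      have "\<forall>e\<in>F. h e \<in> e"
      proof
        fix e assume "e \<in> F"
        show "h e \<in> e"
        proof (cases "e \<in> CE")
          case True
          then obtain j where "j < r" "e = ce j" unfolding CE_def by auto
          then show ?thesis using hce unfolding ce_def by simp
        next
          case False
          then have "e \<in> F'" using \<open>e \<in> F\<close> unfolding F'_def by simp
          then show ?thesis using IH(1) hF' by simp
        qed
      qed
      moreover have "bij_betw l F {1..card F}"
      proof -
        have "bij_betw l F' {1..n-r} = bij_betw l' F' {1..n-r}"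
          by (rule bij_betw_cong) (use hF' in auto)
        then have b1: "bij_betw l F' {1..n-r}" using IH(2) cF' by simp
        have b2: "bij_betw l CE {n-r+1..n}"
        proof (rule bij_betw_imageI)
          show "inj_on l CE"
          proof (rule inj_onI)
            fix a b assume "a \<in> CE" "b \<in> CE" "l a = l b"
            then obtain i j where "i < r" "j < r" "a = ce i" "b = ce j" unfolding CE_def by auto
            then show "a = b" using \<open>l a = l b\<close> lce by auto
          qed
          show "l ` CE = {n-r+1..n}"
          proof
            show "l ` CE \<subseteq> {n-r+1..n}" unfolding CE_def using lce rn by auto
            show "{n-r+1..n} \<subseteq> l ` CE"
            proof
              fix k assume k: "k \<in> {n-r+1..n}"
              define j where "j = k - (n - r) - 1"
              have "j < r" "k = n - r + Suc j" using k rn unfolding j_def by auto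
              then have "k = l (ce j)" using lce by simp
              moreover have "ce j \<in> CE" unfolding CE_def using \<open>j < r\<close> by simp
              ultimately show "k \<in> l ` CE" by (rule image_eqI)
            qed
          qed
        qed
        have "bij_betw l (F' \<union> CE) ({1..n-r} \<union> {n-r+1..n})"
          by (rule bij_betw_combine[OF b1 b2]) auto
        moreover have "F' \<union> CE = F" unfolding F'_def using CEF by auto
        moreover have "{1..n-r} \<union> {n-r+1..n} = {1..n}" using rn by auto
        ultimately show ?thesis unfolding n_def by simp
      qed
      moreover have "ev F h l u \<le> int (card F)" for u
      proof -
        have finCE: "finite CE" unfolding CE_def by simp
        have FU: "F = F' \<union> CE" unfolding F'_def using CEF by auto
        have "F' \<inter> CE = {}" unfolding F'_def by auto
        then have "ev (F' \<union> CE) h l u = ev F' h l u + ev CE h l u"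
          using ev_union[of F' CE h l u] \<open>finite F'\<close> finCE by simp
        then have "ev F h l u = ev F' h l u + ev CE h l u" using FU by simp
        moreover have "ev F' h l u = ev F' h' l' u" using hF' by (intro ev_cong) auto
        moreover have "ev CE h l u \<le> int r"
        proof -
          define L where "L j = int (n - r + Suc j)" for j
          have "ev CE h l u = (\<Sum>j<r. (if u \<in> ce j then (if h (ce j) = u then int (l (ce j)) else - int (l (ce j))) else 0))"
            unfolding ev_def CE_def by (simp add: sum.reindex[OF inj_ce])
          also have "\<dots> = (\<Sum>j<r. (if cs!(Suc j mod r) = u then L j else 0) - (if cs!j = u then L j else 0))"
          proof (rule sum.cong)
            fix j assume "j \<in> {..<r}"
            then have j: "j < r" by simp
            show "(if u \<in> ce j then (if h (ce j) = u then int (l (ce j)) else - int (l (ce j))) else 0) =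
                  (if cs!(Suc j mod r) = u then L j else 0) - (if cs!j = u then L j else 0)"
              using ce_ne[OF j] hce[OF j] lce[OF j] unfolding ce_def L_def by auto
          qed simp
          also have "\<dots> = (\<Sum>j<r. if cs!(Suc j mod r) = u then L j else 0) - (\<Sum>j<r. if cs!j = u then L j else 0)"
            by (simp add: sum_subtractf)
          finally have evc: "ev CE h l u = (\<Sum>j<r. if cs!(Suc j mod r) = u then L j else 0) - (\<Sum>j<r. if cs!j = u then L j else 0)" .
          show ?thesis
          proof (cases "u \<in> set cs")
            case False
            then have "\<forall>j<r. cs!j \<noteq> u \<and> cs!(Suc j mod r) \<noteq> u" using Sr unfolding r_def by (auto simp: in_set_conv_nth)
            then show ?thesis using evc by simp
          next
            case True
            then obtain k where k: "k < r" "cs!k = u" unfolding r_def by (auto simp: in_set_conv_nth)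
            have iff: "(cs!a = cs!b) = (a = b)" if "a < r" "b < r" for a b
              using cs(1) that unfolding r_def by (simp add: nth_eq_iff_index_eq)
            have s2: "(\<Sum>j<r. if cs!j = u then L j else 0) = L k"
            proof -
              have "(\<Sum>j<r. if cs!j = u then L j else 0) = (\<Sum>j<r. if j = k then L j else 0)"
                using iff k by (intro sum.cong) auto
              also have "\<dots> = L k" using k by simp
              finally show ?thesis .
            qed
            define j0 where "j0 = (if k = 0 then r - 1 else k - 1)"
            have j0: "j0 < r" unfolding j0_def using k by auto
            have s1: "(\<Sum>j<r. if cs!(Suc j mod r) = u then L j else 0) = L j0"
            proof -
              have "cs!(Suc j mod r) = u \<longleftrightarrow> j = j0" if "j < r" for j
              proof -
                have "cs!(Suc j mod r) = u \<longleftrightarrow> Suc j mod r = k" using iff[OF Sr[of j] k(1)] k by simp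
                also have "\<dots> \<longleftrightarrow> j = j0" using ms[OF that] that k(1) unfolding j0_def by auto
                finally show ?thesis .
              qed
              then have "(\<Sum>j<r. if cs!(Suc j mod r) = u then L j else 0) = (\<Sum>j<r. if j = j0 then L j else 0)"
                by (intro sum.cong) auto
              also have "\<dots> = L j0" using j0 by simp
              finally show ?thesis .
            qed
            have "L j0 \<le> int n" unfolding L_def using j0 rn by simp
            moreover have "L k = int (n - r + Suc k)" unfolding L_def by simp
            ultimately show ?thesis using evc s1 s2 rn by simp
          qed
        qed
        ultimately show ?thesis using IH(3)[rule_format, of u] cF' rn unfolding n_def by simp
      qed
      ultimately show ?thesis by blast
    qed
  qed
qed

lemma sg_facts:
  assumes "simple_graph V E"
  shows "finite E" "edges2 E" "\<forall>e\<in>E. e \<subseteq> V"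
proof -
  have ex: "\<exists>u v. e = {u, v} \<and> u \<noteq> v \<and> u \<in> V \<and> v \<in> V" if "e \<in> E" for e
    using assms that unfolding simple_graph_def by (elim conjE) (rule bspec)
  have sub: "e \<subseteq> V" if eE: "e \<in> E" for e
  proof -
    obtain u v where "e = {u, v}" "u \<in> V" "v \<in> V" using ex[OF eE] by (elim exE conjE)
    then show ?thesis by simp
  qed
  then show "\<forall>e\<in>E. e \<subseteq> V" by (intro ballI)
  have "E \<subseteq> Pow V" using sub by blast
  moreover have "finite V" using assms unfolding simple_graph_def by simp
  ultimately show "finite E" by (rule finite_subset[OF _ finite_Pow_iff[THEN iffD2]])
  show "edges2 E" unfolding edges2_def
  proof
    fix e assume "e \<in> E"
    obtain u v where "e = {u, v}" "u \<noteq> v" using ex[OF \<open>e \<in> E\<close>] by (elim exE conjE)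
    then show "\<exists>u v. e = {u, v} \<and> u \<noteq> v" by (intro exI conjI)
  qed
qed

lemma nbhd_sub:
  assumes "simple_graph V E"
  shows "nbhd E u \<subseteq> V"
  using sg_facts(3)[OF assms] unfolding nbhd_def by auto

lemma pair_in_nbhd: "{u, v} \<in> E \<Longrightarrow> v \<in> nbhd E u"
  unfolding nbhd_def by (simp add: insert_commute)

lemma nbhd_pair: "v \<in> nbhd E u \<Longrightarrow> {u, v} \<in> E"
  unfolding nbhd_def by (simp add: insert_commute)

lemma star_edge:
  assumes "w \<notin> {x, y}" "c \<in> {x, y}" "x \<noteq> y"
  shows "\<not> (x \<in> {w, c} \<and> y \<in> {w, c})" "(x \<in> {w, c}) = (c = x)"
proof -
  have "w \<noteq> x" "w \<noteq> y" using assms(1) by auto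
  have "c = x \<or> c = y" using assms(2) by simp
  then show "\<not> (x \<in> {w, c} \<and> y \<in> {w, c})" "(x \<in> {w, c}) = (c = x)"
    using \<open>w \<noteq> x\<close> \<open>w \<noteq> y\<close> assms(3) by auto
qed

lemma wof_lemma:
  assumes "w \<in> W" "c \<notin> W"
  shows "(SOME z. z \<in> {w, c} \<and> z \<in> W) = w"
proof (rule some_equality)
  show "w \<in> {w, c} \<and> w \<in> W" using assms by simp
  fix z assume "z \<in> {w, c} \<and> z \<in> W"
  then show "z = w" using assms by auto
qed

lemma GEN:
  assumes sg: "simple_graph V E" and xV: "x \<in> V" and yV: "y \<in> V" and xy: "x \<noteq> y"
    and cover: "closed_nbhd E x \<union> closed_nbhd E y = V"
    and Wd: "W = V - {x, y}" and Ad: "A = nbhd E x - {y}" and Yd: "Y = nbhd E y - {x}"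
    and Cd: "C = A \<inter> Y" and Fd: "F = {e\<in>E. e \<subseteq> W}"
    and hF: "\<forall>e\<in>F. hF e \<in> e" and lF: "bij_betw lF F LF"
    and pQ: "bij_betw p W Q" and lamC: "bij_betw lam C LC"
    and priv: "\<forall>w\<in>W. priv w \<in> {x, y} \<and> {w, priv w} \<in> E"
    and rLF: "LF \<subseteq> {1..card E}" and rQ: "Q \<subseteq> {1..card E}" and rLC: "LC \<subseteq> {1..card E}"
    and rl: "{x, y} \<in> E \<Longrightarrow> lxy \<in> {1..card E} \<and> lxy \<notin> LF \<and> lxy \<notin> LC \<and> lxy \<notin> Q"
    and d1: "LF \<inter> Q = {}" and d2: "LF \<inter> LC = {}" and d3: "LC \<inter> Q = {}"
    and inj: "inj_on (\<lambda>u. if u = x then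
                (\<Sum>a\<in>A. int (if priv a = x then p a else lam a)) + (if {x, y} \<in> E then (if \<epsilon> then - int lxy else int lxy) else 0)
              else if u = y then
                (\<Sum>w\<in>Y. int (if priv w = y then p w else lam w)) + (if {x, y} \<in> E then (if \<epsilon> then int lxy else - int lxy) else 0)
              else ev F hF lF u - int (p u) - (if u \<in> C then int (lam u) else 0)) V"
  shows "has_antimagic_orientation V E"
proof -
  note sgf = sg_facts[OF sg]
  define g where "g w c = (if c = priv w then p w else lam w)" for w c
  define hd where "hd e = (if e \<subseteq> W then hF e else if x \<in> e \<and> y \<in> e then (if \<epsilon> then y else x)
                           else if x \<in> e then x else y)" for e
  define wof where "wof e = (SOME z. z \<in> e \<and> z \<in> W)" for e
  define lab where "lab e = (if e \<subseteq> W then lF e else if x \<in> e \<and> y \<in> e then lxy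
                            else g (wof e) (if x \<in> e then x else y))" for e
  have xW: "x \<notin> W" and yW: "y \<notin> W" using Wd by auto
  have star: "hd {w, c} = c \<and> lab {w, c} = g w c" if w: "w \<in> W" and c: "c \<in> {x, y}" for w c
  proof -
    have cW: "c \<notin> W" using c xW yW by auto
    have ns: "\<not> {w, c} \<subseteq> W" using cW by simp
    have wxy: "w \<notin> {x, y}" using w xW yW by auto
    note se = star_edge[OF wxy c xy]
    have "wof {w, c} = w" unfolding wof_def using wof_lemma[OF w cW] .
    moreover have "(if x \<in> {w, c} then x else y) = c" using se(2) c xy by auto
    ultimately have i3: "(if x \<in> {w, c} then x else y) = c" and i4: "wof {w, c} = w" by auto
    have "hd {w, c} = (if x \<in> {w, c} then x else y)"
      unfolding hd_def by (simp only: if_not_P[OF ns] if_not_P[OF se(1)])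
    moreover have "lab {w, c} = g (wof {w, c}) (if x \<in> {w, c} then x else y)"
      unfolding lab_def by (simp only: if_not_P[OF ns] if_not_P[OF se(1)])
    ultimately show ?thesis using i3 i4 by simp
  qed
  have xyv: "hd {x, y} = (if \<epsilon> then y else x)" "lab {x, y} = lxy"
    unfolding hd_def lab_def using xW by auto
  have Fsub: "F \<subseteq> E" using Fd by auto
  have finF: "finite F" using Fsub sgf(1) finite_subset by blast
  have e2F: "edges2 F" using edges2_subset[OF sgf(2) Fsub] .
  have Fv: "hd e = hF e \<and> lab e = lF e" if "e \<in> F" for e using that Fd unfolding hd_def lab_def by auto
  have cls: "e \<in> F \<or> e = {x, y} \<or> (\<exists>w c. w \<in> W \<and> c \<in> {x, y} \<and> e = {w, c})" if eE: "e \<in> E" for e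
  proof -
    obtain a b where ab: "e = {a, b}" "a \<noteq> b" by (rule edge_obtain[OF sgf(2) eE])
    have aV: "a \<in> V" and bV: "b \<in> V" using sgf(3) eE ab(1) by auto
    show ?thesis
    proof (cases "a \<in> W")
      case aW: True
      show ?thesis
      proof (cases "b \<in> W")
        case True
        then have "e \<in> F" using Fd eE ab(1) aW by simp
        then show ?thesis by simp
      next
        case False
        then have "b \<in> {x, y}" using bV Wd by simp
        then show ?thesis using aW ab(1) by blast
      qed
    next
      case aW: False
      then have ax: "a \<in> {x, y}" using aV Wd by simp
      show ?thesis
      proof (cases "b \<in> W")
        case True
        then have "e = {b, a}" using ab(1) by (simp add: insert_commute)
        then show ?thesis using True ax by blast
      next
        case False
        then have "b \<in> {x, y}" using bV Wd by simp
        then have "e = {x, y}" using ax ab by (auto simp: insert_commute)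
        then show ?thesis by simp
      qed
    qed
  qed
  have privC: "w \<in> C" if w: "w \<in> W" and c: "c \<in> {x, y}" and cne: "c \<noteq> priv w" and wc: "{w, c} \<in> E" for w c
  proof -
    have pw: "priv w \<in> {x, y}" "{w, priv w} \<in> E" using priv w by auto
    have "{c, priv w} = {x, y}" using c cne pw(1) by auto
    then have "{w, x} \<in> E \<and> {w, y} \<in> E" using wc pw(2) c cne pw(1) by auto
    then have "w \<in> nbhd E x" "w \<in> nbhd E y" using pair_in_nbhd by (metis insert_commute)+
    moreover have "w \<noteq> x" "w \<noteq> y" using w xW yW by auto
    ultimately show ?thesis using Cd Ad Yd by auto
  qed
  have grange: "g w c \<in> Q \<and> c = priv w \<or> g w c \<in> LC \<and> c \<noteq> priv w \<and> w \<in> C"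
    if w: "w \<in> W" and c: "c \<in> {x, y}" and wc: "{w, c} \<in> E" for w c
  proof (cases "c = priv w")
    case True
    then show ?thesis using pQ w unfolding g_def bij_betw_def by auto
  next
    case False
    then have "w \<in> C" using privC w c wc by blast
    then show ?thesis using lamC False unfolding g_def bij_betw_def by auto
  qed
  have hdE: "\<forall>e\<in>E. hd e \<in> e"
  proof
    fix e assume eE: "e \<in> E"
    from cls[OF eE] show "hd e \<in> e"
    proof (elim disjE exE conjE)
      assume "e \<in> F" then show ?thesis using Fv hF by simp
    next
      assume "e = {x, y}" then show ?thesis using xyv by simp
    next
      fix w c assume "w \<in> W" "c \<in> {x, y}" "e = {w, c}"
      then show ?thesis using star by simp
    qed
  qed
  have labR: "lab e \<in> {1..card E}" if eE: "e \<in> E" for e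
  proof -
    from cls[OF eE] show ?thesis
    proof (elim disjE exE conjE)
      assume "e \<in> F" then show ?thesis using Fv lF rLF unfolding bij_betw_def by auto
    next
      assume "e = {x, y}" then show ?thesis using xyv rl eE by simp
    next
      fix w c assume a: "w \<in> W" "c \<in> {x, y}" "e = {w, c}"
      then show ?thesis using star[OF a(1,2)] grange[OF a(1,2)] eE rQ rLC by auto
    qed
  qed
  have labF: "lab e \<in> LF" if "e \<in> F" for e using Fv[OF that] lF that unfolding bij_betw_def by auto
  have labS: "lab {w, c} \<in> Q \<union> LC" if a: "w \<in> W" "c \<in> {x, y}" "{w, c} \<in> E" for w c
    using star[OF a(1,2)] grange[OF a] by auto
  have labxy: "lab {x, y} \<notin> LF \<union> LC \<union> Q" if "{x, y} \<in> E" using rl[OF that] xyv by simp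
  have injlab: "inj_on lab E"
  proof (rule inj_onI)
    fix e1 e2 assume e1E: "e1 \<in> E" and e2E: "e2 \<in> E" and eq: "lab e1 = lab e2"
    have injlF: "inj_on lF F" using lF unfolding bij_betw_def by simp
    have injp: "inj_on p W" using pQ unfolding bij_betw_def by simp
    have injlam: "inj_on lam C" using lamC unfolding bij_betw_def by simp
    from cls[OF e1E] show "e1 = e2"
    proof (elim disjE exE conjE)
      assume f1: "e1 \<in> F"
      from cls[OF e2E] show ?thesis
      proof (elim disjE exE conjE)
        assume "e2 \<in> F" then show ?thesis using f1 eq Fv injlF by (simp add: inj_on_def)
      next
        assume "e2 = {x, y}"
        then have False using labxy labF[OF f1] eq e2E by auto
        then show ?thesis ..
      next
        fix w c assume a: "w \<in> W" "c \<in> {x, y}" "e2 = {w, c}"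
        have "lab e2 \<in> Q \<union> LC" using labS[OF a(1,2)] a(3) e2E by simp
        then have False using labF[OF f1] eq d1 d2 by auto
        then show ?thesis ..
      qed
    next
      assume f1: "e1 = {x, y}"
      from cls[OF e2E] show ?thesis
      proof (elim disjE exE conjE)
        assume "e2 \<in> F"
        then have False using labxy labF eq f1 e1E by auto
        then show ?thesis ..
      next
        assume "e2 = {x, y}" then show ?thesis using f1 by simp
      next
        fix w c assume a: "w \<in> W" "c \<in> {x, y}" "e2 = {w, c}"
        have "lab e2 \<in> Q \<union> LC" using labS[OF a(1,2)] a(3) e2E by simp
        then have False using labxy eq f1 e1E by auto
        then show ?thesis ..
      qed
    next
      fix w1 c1 assume a1: "w1 \<in> W" "c1 \<in> {x, y}" "e1 = {w1, c1}"
      from cls[OF e2E] show ?thesis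
      proof (elim disjE exE conjE)
        assume f2: "e2 \<in> F"
        have "lab e1 \<in> Q \<union> LC" using labS[OF a1(1,2)] a1(3) e1E by simp
        then have False using labF[OF f2] eq d1 d2 by auto
        then show ?thesis ..
      next
        assume f2: "e2 = {x, y}"
        have "lab e1 \<in> Q \<union> LC" using labS[OF a1(1,2)] a1(3) e1E by simp
        then have False using labxy eq f2 e2E by auto
        then show ?thesis ..
      next
        fix w2 c2 assume a2: "w2 \<in> W" "c2 \<in> {x, y}" "e2 = {w2, c2}"
        have g: "g w1 c1 = g w2 c2" using eq star[OF a1(1,2)] star[OF a2(1,2)] a1(3) a2(3) by simp
        have r1: "g w1 c1 \<in> Q \<and> c1 = priv w1 \<or> g w1 c1 \<in> LC \<and> c1 \<noteq> priv w1 \<and> w1 \<in> C"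
          using grange[OF a1(1,2)] e1E a1(3) by simp
        have r2: "g w2 c2 \<in> Q \<and> c2 = priv w2 \<or> g w2 c2 \<in> LC \<and> c2 \<noteq> priv w2 \<and> w2 \<in> C"
          using grange[OF a2(1,2)] e2E a2(3) by simp
        have "w1 = w2 \<and> c1 = c2"
        proof (cases "c1 = priv w1")
          case True
          then have "g w1 c1 = p w1" "g w1 c1 \<in> Q" using r1 unfolding g_def by auto
          then have "c2 = priv w2" using r2 g d3 by auto
          then have "p w1 = p w2" using g True unfolding g_def by simp
          then have "w1 = w2" using injp a1(1) a2(1) by (simp add: inj_on_def)
          then show ?thesis using True \<open>c2 = priv w2\<close> by simp
        next
          case False
          then have "g w1 c1 = lam w1" "g w1 c1 \<in> LC" "w1 \<in> C" using r1 unfolding g_def by auto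
          then have c2n: "c2 \<noteq> priv w2" "w2 \<in> C" using r2 g d3 by auto
          then have "lam w1 = lam w2" using g False unfolding g_def by simp
          then have "w1 = w2" using injlam \<open>w1 \<in> C\<close> c2n(2) by (simp add: inj_on_def)
          moreover have "c1 = c2" using False c2n(1) a1(2) a2(2) calculation priv a1(1) by auto
          ultimately show ?thesis by simp
        qed
        then show ?thesis using a1(3) a2(3) by simp
      qed
    qed
  qed
  have bij: "bij_betw lab E {1..card E}"
  proof -
    have "lab ` E \<subseteq> {1..card E}" using labR by auto
    moreover have "card (lab ` E) = card {1..card E}" using injlab by (simp add: card_image)
    ultimately have "lab ` E = {1..card E}" by (intro card_subset_eq) auto
    then show ?thesis using injlab unfolding bij_betw_def by simp
  qed
  define T where "T u v = (if hd {u, v} = u then int (lab {u, v}) else - int (lab {u, v}))" for u v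
  have evnv: "ev E hd lab u = (\<Sum>v\<in>nbhd E u. T u v)" for u
    using ev_nv[OF sgf(1,2)] unfolding nv_def T_def by simp
  have finN: "finite (nbhd E u)" for u using nbhd_finite[OF sgf(1,2)] .
  have NV: "nbhd E u \<subseteq> V" for u using nbhd_sub[OF sg] .
  have Nne: "v \<noteq> u" if "v \<in> nbhd E u" for u v using nbhd_ne[OF sgf(2) that] .
  have VW: "V = W \<union> {x, y}" using Wd xV yV by auto
  have valW: "ev E hd lab u = ev F hF lF u - int (p u) - (if u \<in> C then int (lam u) else 0)"
    if uW: "u \<in> W" for u
  proof -
    define N where "N = nbhd E u"
    have Nsplit: "N = (N \<inter> W) \<union> (N \<inter> {x, y})" using NV[of u] VW unfolding N_def by auto
    have s0: "(\<Sum>v\<in>N. T u v) = (\<Sum>v\<in>N \<inter> W. T u v) + (\<Sum>v\<in>N \<inter> {x, y}. T u v)"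
    proof -
      have "(\<Sum>v\<in>(N \<inter> W) \<union> (N \<inter> {x, y}). T u v) = (\<Sum>v\<in>N \<inter> W. T u v) + (\<Sum>v\<in>N \<inter> {x, y}. T u v)"
        by (rule sum.union_disjoint) (use finN[of u] xW yW in \<open>auto simp: N_def\<close>)
      then show ?thesis using Nsplit by simp
    qed
    have nF: "nbhd F u = N \<inter> W"
    proof
      show "nbhd F u \<subseteq> N \<inter> W"
      proof
        fix v assume "v \<in> nbhd F u"
        then have "{v, u} \<in> F" unfolding nbhd_def by simp
        then have "{v, u} \<in> E" "{v, u} \<subseteq> W" using Fd by auto
        then show "v \<in> N \<inter> W" unfolding N_def nbhd_def by simp
      qed
      show "N \<inter> W \<subseteq> nbhd F u"
      proof
        fix v assume "v \<in> N \<inter> W"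
        then have "{v, u} \<in> E" "{v, u} \<subseteq> W" using uW unfolding N_def nbhd_def by auto
        then show "v \<in> nbhd F u" using Fd unfolding nbhd_def by simp
      qed
    qed
    have s1: "(\<Sum>v\<in>N \<inter> W. T u v) = ev F hF lF u"
    proof -
      have "(\<Sum>v\<in>N \<inter> W. T u v) = nv F hF lF u" unfolding nv_def nF[symmetric]
      proof (rule sum.cong)
        fix v assume "v \<in> nbhd F u"
        then have "{u, v} \<in> F" using nbhd_pair by metis
        then show "T u v = (if hF {u, v} = u then int (lF {u, v}) else - int (lF {u, v}))"
          unfolding T_def using Fv by simp
      qed simp
      also have "\<dots> = ev F hF lF u" using ev_nv[OF finF e2F] by simp
      finally show ?thesis .
    qed
    have Tstar: "T u c = - int (g u c)" if "c \<in> {x, y}" for c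
    proof -
      have "hd {u, c} = c" "lab {u, c} = g u c" using star[OF uW that] by auto
      moreover have "c \<noteq> u" using that uW xW yW by auto
      ultimately show ?thesis unfolding T_def by simp
    qed
    have pu: "priv u \<in> {x, y}" "{u, priv u} \<in> E" using priv uW by auto
    have s2: "(\<Sum>v\<in>N \<inter> {x, y}. T u v) = - int (p u) - (if u \<in> C then int (lam u) else 0)"
    proof (cases "u \<in> C")
      case True
      then have "{u, x} \<in> E" "{u, y} \<in> E" using Cd Ad Yd nbhd_pair by (metis Diff_iff IntD1 IntD2 insert_commute)+
      then have "N \<inter> {x, y} = {x, y}" unfolding N_def using pair_in_nbhd by fastforce
      then have "(\<Sum>v\<in>N \<inter> {x, y}. T u v) = T u x + T u y" using xy by simp
      also have "\<dots> = - int (g u x) - int (g u y)" using Tstar by simp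
      also have "\<dots> = - int (p u) - int (lam u)" using pu(1) xy unfolding g_def by auto
      finally show ?thesis using True by simp
    next
      case False
      have "N \<inter> {x, y} = {priv u}"
      proof
        show "{priv u} \<subseteq> N \<inter> {x, y}" using pu pair_in_nbhd unfolding N_def by fastforce
        show "N \<inter> {x, y} \<subseteq> {priv u}"
        proof
          fix c assume c: "c \<in> N \<inter> {x, y}"
          then have "{u, c} \<in> E" unfolding N_def using nbhd_pair by fastforce
          then have "c = priv u" using privC[OF uW _ _ ] c False by blast
          then show "c \<in> {priv u}" by simp
        qed
      qed
      then have "(\<Sum>v\<in>N \<inter> {x, y}. T u v) = T u (priv u)" by simp
      also have "\<dots> = - int (p u)" using Tstar[OF pu(1)] unfolding g_def by simp
      finally show ?thesis using False by simp
    qed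
    show ?thesis using evnv[of u] s0 s1 s2 unfolding N_def by simp
  qed
  have valx: "ev E hd lab x = (\<Sum>a\<in>A. int (if priv a = x then p a else lam a)) +
                 (if {x, y} \<in> E then (if \<epsilon> then - int lxy else int lxy) else 0)"
  proof -
    define N where "N = nbhd E x"
    have AW: "A \<subseteq> W" using Ad Wd NV[of x] Nne[of _ x] by auto
    have Ta: "T x a = int (if priv a = x then p a else lam a)" if "a \<in> A" for a
    proof -
      have aW: "a \<in> W" using AW that by auto
      have "hd {a, x} = x" "lab {a, x} = g a x" using star[OF aW] by auto
      then show ?thesis unfolding T_def g_def by (auto simp: insert_commute)
    qed
    have Ty: "T x y = (if \<epsilon> then - int lxy else int lxy)" unfolding T_def using xyv xy by simp
    show ?thesis
    proof (cases "{x, y} \<in> E")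
      case True
      then have "N = A \<union> {y}" using Ad pair_in_nbhd unfolding N_def by auto
      moreover have "y \<notin> A" "finite A" using Ad finN[of x] by auto
      ultimately have "(\<Sum>v\<in>N. T x v) = (\<Sum>v\<in>A. T x v) + T x y"
        by (simp add: add.commute)
      then show ?thesis using evnv[of x] Ta Ty True unfolding N_def by simp
    next
      case False
      then have "y \<notin> N" unfolding N_def using nbhd_pair by metis
      then have "N = A" using Ad unfolding N_def by auto
      then show ?thesis using evnv[of x] Ta False unfolding N_def by simp
    qed
  qed
  have valy: "ev E hd lab y = (\<Sum>w\<in>Y. int (if priv w = y then p w else lam w)) +
                 (if {x, y} \<in> E then (if \<epsilon> then int lxy else - int lxy) else 0)"
  proof -
    define N where "N = nbhd E y"
    have YW: "Y \<subseteq> W" using Yd Wd NV[of y] Nne[of _ y] by auto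
    have Tw: "T y w = int (if priv w = y then p w else lam w)" if "w \<in> Y" for w
    proof -
      have wW: "w \<in> W" using YW that by auto
      have "hd {w, y} = y" "lab {w, y} = g w y" using star[OF wW] by auto
      then show ?thesis unfolding T_def g_def by (auto simp: insert_commute)
    qed
    have Tx: "T y x = (if \<epsilon> then int lxy else - int lxy)" unfolding T_def using xyv xy by (simp add: insert_commute)
    show ?thesis
    proof (cases "{x, y} \<in> E")
      case True
      then have "{y, x} \<in> E" by (simp add: insert_commute)
      then have "N = Y \<union> {x}" using Yd pair_in_nbhd unfolding N_def by auto
      moreover have "x \<notin> Y" "finite Y" using Yd finN[of y] by auto
      ultimately have "(\<Sum>v\<in>N. T y v) = (\<Sum>v\<in>Y. T y v) + T y x"
        by (simp add: add.commute)
      then show ?thesis using evnv[of y] Tw Tx True unfolding N_def by simp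
    next
      case False
      then have "x \<notin> N" unfolding N_def using nbhd_pair by (metis insert_commute)
      then have "N = Y" using Yd unfolding N_def by auto
      then show ?thesis using evnv[of y] Tw False unfolding N_def by simp
    qed
  qed
  have "inj_on (ev E hd lab) V"
  proof -
    have "\<forall>u\<in>V. ev E hd lab u = (if u = x then
                (\<Sum>a\<in>A. int (if priv a = x then p a else lam a)) + (if {x, y} \<in> E then (if \<epsilon> then - int lxy else int lxy) else 0)
              else if u = y then
                (\<Sum>w\<in>Y. int (if priv w = y then p w else lam w)) + (if {x, y} \<in> E then (if \<epsilon> then int lxy else - int lxy) else 0)
              else ev F hF lF u - int (p u) - (if u \<in> C then int (lam u) else 0))"
      using valx valy valW VW by auto
    then show ?thesis using inj inj_on_cong by (smt (verit, ccfv_SIG))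
  qed
  then show ?thesis by (rule antimagic_from_ev[OF sgf(1,2) hdE bij])
qed

lemma inj_combine:
  assumes "inj_on g W" "V = W \<union> {x, y}" "x \<notin> W" "y \<notin> W" "x \<noteq> y"
    "\<forall>w\<in>W. g w \<noteq> a" "\<forall>w\<in>W. g w \<noteq> b" "a \<noteq> b"
  shows "inj_on (\<lambda>u. if u = x then a else if u = y then b else g u) V"
  using assms unfolding inj_on_def by (metis Un_iff insert_iff empty_iff)

lemma sorted_inj:
  fixes s :: "'a \<Rightarrow> int" and \<kappa> :: "'a \<Rightarrow> int"
  assumes "\<forall>u\<in>W. \<forall>v\<in>W. \<kappa> u > \<kappa> v \<longrightarrow> p u < p v" "inj_on p W"
    "\<forall>u\<in>W. \<forall>v\<in>W. s u > s v \<longrightarrow> \<kappa> u > \<kappa> v"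
  shows "inj_on (\<lambda>u. s u - int (p u)) W"
proof (rule inj_onI)
  fix u v assume u: "u \<in> W" and v: "v \<in> W" and eq: "s u - int (p u) = s v - int (p v)"
  show "u = v"
  proof (rule ccontr)
    assume ne: "u \<noteq> v"
    have "p u \<noteq> p v" using assms(2) u v ne unfolding inj_on_def by blast
    consider "s u = s v" | "s u > s v" | "s u < s v" by linarith
    then show False
    proof cases
      case 1 then show ?thesis using eq \<open>p u \<noteq> p v\<close> by simp
    next
      case 2 then have "p u < p v" using assms(1,3) u v by blast
      then show ?thesis using eq 2 by simp
    next
      case 3 then have "p v < p u" using assms(1,3) u v by blast
      then show ?thesis using eq 3 by simp
    qed
  qed
qed

lemma sum_ge_two:
  assumes "finite S" "a \<in> S" "b \<in> S" "a \<noteq> b" "inj_on p S" "\<forall>s\<in>S. p s \<ge> (1::nat)"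
  shows "(\<Sum>s\<in>S. int (p s)) \<ge> 3"
proof -
  have "p a \<noteq> p b" using assms(2-5) unfolding inj_on_def by blast
  moreover have "p a \<ge> 1" "p b \<ge> 1" using assms(2,3,6) by auto
  ultimately have "int (p a) + int (p b) \<ge> 3" by linarith
  have "(\<Sum>s\<in>{a, b}. int (p s)) = int (p a) + int (p b)" using assms(4) by simp
  moreover have "(\<Sum>s\<in>{a, b}. int (p s)) \<le> (\<Sum>s\<in>S. int (p s))"
    by (rule sum_mono2) (use assms in auto)
  ultimately show ?thesis using \<open>int (p a) + int (p b) \<ge> 3\<close> by linarith
qed

theorem theorem2p3:
  fixes V :: "'a set" and E :: "'a set set" and x y :: 'a
  assumes "simple_graph V E"
    and "x \<in> V" and "y \<in> V" and "x \<noteq> y"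
    and "closed_nbhd E x \<union> closed_nbhd E y = V"
    and "degree E x \<ge> degree E y"
    and "degree E x \<ge> 4 \<or> nbhd E x \<inter> closed_nbhd E y \<noteq> {}"
  shows "has_antimagic_orientation V E"
proof -
  note sg = assms(1) and xV = assms(2) and yV = assms(3) and xy = assms(4) and cover = assms(5)
    and deg = assms(6) and hyp = assms(7)
  note sgf = sg_facts[OF sg]
  define W where "W = V - {x, y}"
  define A where "A = nbhd E x - {y}"
  define Y where "Y = nbhd E y - {x}"
  define C where "C = A \<inter> Y"
  define F where "F = {e\<in>E. e \<subseteq> W}"
  define hxy where "hxy = ({x, y} \<in> E)"
  have finV: "finite V" using sg unfolding simple_graph_def by simp
  have finW: "finite W" unfolding W_def using finV by simp
  have xW: "x \<notin> W" and yW: "y \<notin> W" unfolding W_def by auto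
  have Nx: "nbhd E x \<subseteq> V" "x \<notin> nbhd E x" using nbhd_sub[OF sg] nbhd_ne[OF sgf(2)] by blast+
  have Ny: "nbhd E y \<subseteq> V" "y \<notin> nbhd E y" using nbhd_sub[OF sg] nbhd_ne[OF sgf(2)] by blast+
  have AW: "A \<subseteq> W" unfolding A_def W_def using Nx by auto
  have YW: "Y \<subseteq> W" unfolding Y_def W_def using Ny by auto
  have WAY: "W = A \<union> Y"
  proof
    show "A \<union> Y \<subseteq> W" using AW YW by auto
    show "W \<subseteq> A \<union> Y"
    proof
      fix w assume "w \<in> W"
      then have "w \<in> closed_nbhd E x \<union> closed_nbhd E y" "w \<noteq> x" "w \<noteq> y" using cover unfolding W_def by auto
      then show "w \<in> A \<union> Y" unfolding A_def Y_def closed_nbhd_def by auto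
    qed
  qed
  have finA: "finite A" and finY: "finite Y" using AW YW finW finite_subset by auto
  have finC: "finite C" unfolding C_def using finA by simp
  have yNx: "(y \<in> nbhd E x) = hxy" unfolding hxy_def nbhd_def by (simp add: insert_commute)
  have xNy: "(x \<in> nbhd E y) = hxy" unfolding hxy_def nbhd_def by simp
  have degx: "degree E x = card A + (if hxy then 1 else 0)"
  proof (cases hxy)
    case True
    then have "nbhd E x = insert y A" unfolding A_def using yNx by auto
    moreover have "y \<notin> A" unfolding A_def by simp
    ultimately show ?thesis using True finA unfolding degree_def by simp
  next
    case False
    then have "nbhd E x = A" unfolding A_def using yNx by auto
    then show ?thesis using False unfolding degree_def by simp
  qed
  have degy: "degree E y = card Y + (if hxy then 1 else 0)"
  proof (cases hxy)
    case True
    then have "nbhd E y = insert x Y" unfolding Y_def using xNy by auto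
    moreover have "x \<notin> Y" unfolding Y_def by simp
    ultimately show ?thesis using True finY unfolding degree_def by simp
  next
    case False
    then have "nbhd E y = Y" unfolding Y_def using xNy by auto
    then show ?thesis using False unfolding degree_def by simp
  qed
  have YA: "card Y \<le> card A" using deg degx degy by simp
  have cardW: "card W = card A + card Y - card C"
    using card_Un_Int[OF finA finY] WAY unfolding C_def by simp
  have CA: "card C \<le> card A" "card C \<le> card Y" unfolding C_def using finA finY by (auto intro: card_mono)
  have cardE: "card E = card F + (if hxy then 1 else 0) + card C + card W"
  proof -
    define Sx where "Sx = (\<lambda>a. {a, x}) ` A"
    define Sy where "Sy = (\<lambda>w. {w, y}) ` Y"
    define XY where "XY = (if hxy then {{x, y}} else {})"
    have Esplit: "E = F \<union> XY \<union> Sx \<union> Sy"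
    proof
      show "F \<union> XY \<union> Sx \<union> Sy \<subseteq> E"
        unfolding F_def XY_def Sx_def Sy_def hxy_def A_def Y_def nbhd_def
        by (auto simp: insert_commute)
      show "E \<subseteq> F \<union> XY \<union> Sx \<union> Sy"
      proof
        fix e assume eE: "e \<in> E"
        obtain a b where ab: "e = {a, b}" "a \<noteq> b" by (rule edge_obtain[OF sgf(2) eE])
        have aV: "a \<in> V" "b \<in> V" using sgf(3) eE ab(1) by auto
        have key: "e \<in> F \<union> XY \<union> Sx \<union> Sy" if "u \<in> V" "v \<in> V" "u \<noteq> v" "e = {u, v}" for u v
        proof -
          have uvE: "{u, v} \<in> E" using eE that(4) by simp
          show ?thesis
          proof (cases "u \<in> W")
            case uW: True
            show ?thesis
            proof (cases "v \<in> W")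
              case True then have "e \<in> F" unfolding F_def using eE that(4) uW by simp
              then show ?thesis by simp
            next
              case False
              then have "v = x \<or> v = y" using that(2) unfolding W_def by simp
              then show ?thesis
              proof
                assume "v = x"
                then have "u \<in> A" unfolding A_def using uvE uW yW pair_in_nbhd by (metis insert_commute DiffI singletonD)
                then show ?thesis unfolding Sx_def using that(4) \<open>v = x\<close> by blast
              next
                assume "v = y"
                then have "u \<in> Y" unfolding Y_def using uvE uW xW pair_in_nbhd by (metis insert_commute DiffI singletonD)
                then show ?thesis unfolding Sy_def using that(4) \<open>v = y\<close> by blast
              qed
            qed
          next
            case False
            then have u: "u = x \<or> u = y" using that(1) unfolding W_def by simp
            show ?thesis
            proof (cases "v \<in> W")
              case True
              then show ?thesis
              proof (cases "u = x")
                case True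
                then have "v \<in> A" unfolding A_def using uvE \<open>v \<in> W\<close> yW pair_in_nbhd by (metis DiffI singletonD)
                then show ?thesis unfolding Sx_def using that(4) True by (auto simp: insert_commute)
              next
                case False
                then have "u = y" using u by simp
                then have "v \<in> Y" unfolding Y_def using uvE \<open>v \<in> W\<close> xW pair_in_nbhd by (metis DiffI singletonD)
                then show ?thesis unfolding Sy_def using that(4) \<open>u = y\<close> by (auto simp: insert_commute)
              qed
            next
              case False
              then have "v = x \<or> v = y" using that(2) unfolding W_def by simp
              then have "e = {x, y}" using u that(3,4) by (auto simp: insert_commute)
              then have "hxy" using eE unfolding hxy_def by simp
              then show ?thesis unfolding XY_def using \<open>e = {x, y}\<close> by simp
            qed
          qed
        qed
        show "e \<in> F \<union> XY \<union> Sx \<union> Sy" using key[OF aV ab(2) ab(1)] .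
      qed
    qed
    have finE: "finite E" using sgf(1) .
    have fins: "finite F" "finite XY" "finite Sx" "finite Sy" using Esplit finE finite_subset by auto
    have dj1: "F \<inter> XY = {}" unfolding F_def XY_def using xW by auto
    have dj2: "(F \<union> XY) \<inter> Sx = {}" unfolding F_def XY_def Sx_def using xW AW yW xy by (auto simp: doubleton_eq_iff)
    have dj3: "(F \<union> XY \<union> Sx) \<inter> Sy = {}" unfolding F_def XY_def Sx_def Sy_def using xW AW yW YW xy
      by (auto simp: doubleton_eq_iff)
    have cSx: "card Sx = card A" unfolding Sx_def
      by (rule card_image) (rule inj_onI, use AW xW in \<open>auto simp: doubleton_eq_iff\<close>)
    have cSy: "card Sy = card Y" unfolding Sy_def
      by (rule card_image) (rule inj_onI, use YW yW in \<open>auto simp: doubleton_eq_iff\<close>)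
    have cXY: "card XY = (if hxy then 1 else 0)" unfolding XY_def by simp
    have "card E = card F + card XY + card Sx + card Sy"
      using Esplit fins dj1 dj2 dj3 by (simp add: card_Un_disjoint)
    then show ?thesis using cSx cSy cXY cardW CA by simp
  qed
  have finF: "finite F" unfolding F_def using sgf(1) by simp
  have e2F: "edges2 F" unfolding F_def by (rule edges2_subset[OF sgf(2)]) auto
  define f where "f = card F"
  obtain hF0 lF0 where L1: "\<forall>e\<in>F. hF0 e \<in> e" "bij_betw lF0 F {1..f}" "\<forall>u. ev F hF0 lF0 u \<le> int f"
    using one_sided[OF finF e2F] unfolding f_def by blast
  define hn :: nat where "hn = (if hxy then 1 else 0)"
  define L where "L = f + hn + card C"
  define LC where "LC = {f + hn + 1..L}"
  have cE: "card E = L + card W" using cardE unfolding L_def hn_def f_def by simp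
  obtain lam where lam: "bij_betw lam C LC"
    using sort_lemma[OF finC, of LC "\<lambda>_. 0"] unfolding LC_def L_def by auto
  have lamr: "lam c \<in> LC" if "c \<in> C" for c using lam that unfolding bij_betw_def by auto
  define s1 where "s1 u = ev F hF0 lF0 u - (if u \<in> C then int (lam u) else 0)" for u
  define \<kappa> where "\<kappa> u = 2 * s1 u + (if u \<in> A then 0 else 1)" for u
  define Q where "Q = {L + 1..card E}"
  have cQ: "card Q = card W" unfolding Q_def using cE by simp
  obtain p where pQ: "bij_betw p W Q" and pord: "\<forall>u\<in>W. \<forall>v\<in>W. \<kappa> u > \<kappa> v \<longrightarrow> p u < p v"
    using sort_lemma[OF finW _ cQ, of \<kappa>] unfolding Q_def by auto
  have pr: "p w \<in> Q" if "w \<in> W" for w using pQ that unfolding bij_betw_def by auto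
  have injp: "inj_on p W" using pQ unfolding bij_betw_def by simp
  define g where "g u = ev F hF0 lF0 u - int (p u) - (if u \<in> C then int (lam u) else 0)" for u
  have injg: "inj_on g W"
  proof -
    have "inj_on (\<lambda>u. s1 u - int (p u)) W"
      by (rule sorted_inj[OF pord injp]) (auto simp: \<kappa>_def)
    moreover have "\<And>u. s1 u - int (p u) = g u" unfolding s1_def g_def by simp
    ultimately show ?thesis by simp
  qed
  have gneg: "g w \<le> int f - int L - 1" if "w \<in> W" for w
  proof -
    have "p w \<ge> L + 1" using pr[OF that] unfolding Q_def by simp
    then show ?thesis unfolding g_def using L1(3)[rule_format, of w] by simp
  qed
  have GENi0: "has_antimagic_orientation V E"
    if pv: "\<forall>w\<in>W. pv w \<in> {x, y} \<and> {w, pv w} \<in> E"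
    and ij: "inj_on (\<lambda>u. if u = x then
                (\<Sum>a\<in>A. int (if pv a = x then p a else lam a)) + (if {x, y} \<in> E then (if \<epsilon> then - int (f + 1) else int (f + 1)) else 0)
              else if u = y then
                (\<Sum>w\<in>Y. int (if pv w = y then p w else lam w)) + (if {x, y} \<in> E then (if \<epsilon> then int (f + 1) else - int (f + 1)) else 0)
              else ev F hF0 lF0 u - int (p u) - (if u \<in> C then int (lam u) else 0)) V"
    for pv \<epsilon>
  proof (rule GEN[OF sg xV yV xy cover W_def A_def Y_def C_def F_def L1(1) L1(2) pQ lam pv _ _ _ _ _ _ _ ij])
    show "{1..f} \<subseteq> {1..card E}" using cE unfolding L_def by auto
    show "Q \<subseteq> {1..card E}" unfolding Q_def by auto
    show "LC \<subseteq> {1..card E}" unfolding LC_def using cE by auto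
    show "f + 1 \<in> {1..card E} \<and> f + 1 \<notin> {1..f} \<and> f + 1 \<notin> LC \<and> f + 1 \<notin> Q" if "{x, y} \<in> E"
      using that cE unfolding LC_def Q_def L_def hn_def hxy_def by auto
    show "{1..f} \<inter> Q = {}" unfolding Q_def L_def by auto
    show "{1..f} \<inter> LC = {}" unfolding LC_def by auto
    show "LC \<inter> Q = {}" unfolding LC_def Q_def by auto
  qed
  have GENi: "has_antimagic_orientation V E"
    if pv: "\<forall>w\<in>W. pv w \<in> {x, y} \<and> {w, pv w} \<in> E"
    and vxd: "VX = (\<Sum>a\<in>A. int (if pv a = x then p a else lam a)) + (if {x, y} \<in> E then (if \<epsilon> then - int (f + 1) else int (f + 1)) else 0)"
    and vyd: "VY = (\<Sum>w\<in>Y. int (if pv w = y then p w else lam w)) + (if {x, y} \<in> E then (if \<epsilon> then int (f + 1) else - int (f + 1)) else 0)"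
    and ij: "inj_on (\<lambda>u. if u = x then VX else if u = y then VY else g u) V"
    for pv \<epsilon> VX VY
  proof (rule GENi0[OF pv])
    show "inj_on (\<lambda>u. if u = x then
                (\<Sum>a\<in>A. int (if pv a = x then p a else lam a)) + (if {x, y} \<in> E then (if \<epsilon> then - int (f + 1) else int (f + 1)) else 0)
              else if u = y then
                (\<Sum>w\<in>Y. int (if pv w = y then p w else lam w)) + (if {x, y} \<in> E then (if \<epsilon> then int (f + 1) else - int (f + 1)) else 0)
              else ev F hF0 lF0 u - int (p u) - (if u \<in> C then int (lam u) else 0)) V"
      using ij unfolding vxd vyd g_def .
  qed
  have pge: "L + 1 \<le> p w" "p w \<le> card E" if "w \<in> W" for w using pr[OF that] unfolding Q_def by auto
  have lamb: "f + hn + 1 \<le> lam c" "lam c \<le> L" if "c \<in> C" for c using lamr[OF that] unfolding LC_def by auto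
  define SX where "SX = (\<Sum>a\<in>A. int (p a))"
  define SY where "SY = (\<Sum>w\<in>Y. int (if w \<in> A then lam w else p w))"
  define priv0 where "priv0 w = (if w \<in> A then x else y)" for w
  have inA: "{w, x} \<in> E" if "w \<in> A" for w using that unfolding A_def using nbhd_pair by (metis DiffD1 insert_commute)
  have inY: "{w, y} \<in> E" if "w \<in> Y" for w using that unfolding Y_def using nbhd_pair by (metis DiffD1 insert_commute)
  have pv0: "\<forall>w\<in>W. priv0 w \<in> {x, y} \<and> {w, priv0 w} \<in> E"
  proof
    fix w assume "w \<in> W"
    show "priv0 w \<in> {x, y} \<and> {w, priv0 w} \<in> E"
    proof (cases "w \<in> A")
      case True then show ?thesis unfolding priv0_def using inA by simp
    next
      case False then have "w \<in> Y" using WAY \<open>w \<in> W\<close> by auto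
      then show ?thesis unfolding priv0_def using inY False by simp
    qed
  qed
  have sum0x: "(\<Sum>a\<in>A. int (if priv0 a = x then p a else lam a)) = SX"
    unfolding SX_def priv0_def by (rule sum.cong) auto
  have sum0y: "(\<Sum>w\<in>Y. int (if priv0 w = y then p w else lam w)) = SY"
    unfolding SY_def priv0_def using xy by (intro sum.cong) auto
  have SXge: "SX \<ge> int (p a)" if "a \<in> A" for a
    unfolding SX_def by (rule member_le_sum) (use that finA in auto)
  have SYnn: "SY \<ge> 0" unfolding SY_def by (rule sum_nonneg) simp
  have SXnn: "SX \<ge> 0" unfolding SX_def by (rule sum_nonneg) simp
  have VW: "V = W \<union> {x, y}" unfolding W_def using xV yV by auto
  have YA0: "Y = {}" if "A = {}" using YA that finY by simp
  show ?thesis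
  proof (cases hxy)
    case True
    then have xyE: "{x, y} \<in> E" unfolding hxy_def .
    have hn1: "hn = 1" unfolding hn_def using True by simp
    have gneg2: "g w \<le> -2" if "w \<in> W" for w using gneg[OF that] unfolding L_def hn1 by simp
    show ?thesis
    proof (cases "SX - int (f + 1) = SY + int (f + 1)")
      case False
      have "inj_on (\<lambda>u. if u = x then SX - int (f + 1) else if u = y then SY + int (f + 1) else g u) V"
      proof (rule inj_combine[OF injg VW xW yW xy _ _ False])
        show "\<forall>w\<in>W. g w \<noteq> SX - int (f + 1)"
        proof
          fix w assume wW: "w \<in> W"
          then have "A \<noteq> {}" using YA0 WAY by auto
          then obtain a where "a \<in> A" by blast
          then have "SX \<ge> int (L + 1)" using SXge pge AW by force
          then show "g w \<noteq> SX - int (f + 1)" using gneg2[OF wW] unfolding L_def hn1 by simp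
        qed
        show "\<forall>w\<in>W. g w \<noteq> SY + int (f + 1)" using gneg2 SYnn by fastforce
      qed
      then have ijx: ?this .
      show ?thesis by (rule GENi[where \<epsilon> = True, OF pv0 _ _ ijx]) (simp_all add: sum0x sum0y xyE)
    next
      case True
      note eq1 = True
      have "inj_on (\<lambda>u. if u = x then SX + int (f + 1) else if u = y then SY - int (f + 1) else g u) V"
      proof (rule inj_combine[OF injg VW xW yW xy])
        show "SX + int (f + 1) \<noteq> SY - int (f + 1)" using eq1 by simp
        show "\<forall>w\<in>W. g w \<noteq> SX + int (f + 1)" using gneg2 SXnn by fastforce
        show "\<forall>w\<in>W. g w \<noteq> SY - int (f + 1)"
        proof (cases "Y = {}")
          case False
          then obtain w0 where w0: "w0 \<in> Y" by blast
          have "int (if w0 \<in> A then lam w0 else p w0) \<ge> int (f + 2)"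
          proof (cases "w0 \<in> A")
            case True then have "w0 \<in> C" unfolding C_def using w0 by simp
            then show ?thesis using lamb True unfolding hn1 by force
          next
            case False then show ?thesis using pge[of w0] w0 YW unfolding L_def hn1 by force
          qed
          moreover have "SY \<ge> int (if w0 \<in> A then lam w0 else p w0)"
            unfolding SY_def by (rule member_le_sum) (use w0 finY in auto)
          ultimately show ?thesis using gneg2 by fastforce
        next
          case True
          then have C0: "C = {}" and WA: "W = A" using WAY unfolding C_def by auto
          have SY0: "SY = 0" unfolding SY_def using True by simp
          then have SX2: "SX = 2 * int f + 2" using eq1 by simp
          have L1': "L = f + 1" unfolding L_def hn1 C0 by simp
          have "f = 0"
          proof -
            have "A \<noteq> {}" using SX2 unfolding SX_def by auto
            then obtain a where a: "a \<in> A" by blast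
            have "A = {a}"
            proof (rule ccontr)
              assume "A \<noteq> {a}"
              then obtain b where b: "b \<in> A" "b \<noteq> a" using a by blast
              have "(\<Sum>s\<in>{a, b}. int (p s)) \<le> SX"
                unfolding SX_def by (rule sum_mono2) (use finA a b in auto)
              moreover have "(\<Sum>s\<in>{a, b}. int (p s)) = int (p a) + int (p b)" using b by simp
              moreover have "p a \<ge> f + 2" "p b \<ge> f + 2" using pge a b WA L1' by auto
              ultimately show False using SX2 by linarith
            qed
            then have "card W = 1" using WA by simp
            then have "p a \<le> f + 2" using pge(2)[of a] a WA cE L1' by simp
            moreover have "SX = int (p a)" unfolding SX_def using \<open>A = {a}\<close> by simp
            ultimately show ?thesis using SX2 by linarith
          qed
          then show ?thesis using gneg2 SY0 by fastforce
        qed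
      qed
      then have ijx: ?this .
      show ?thesis by (rule GENi[where \<epsilon> = False, OF pv0 _ _ ijx]) (simp_all add: sum0x sum0y xyE)
    qed
  next
    case False
    then have xyE: "{x, y} \<notin> E" unfolding hxy_def .
    have gneg1: "g w < 0" if "w \<in> W" for w using gneg[OF that] unfolding L_def by simp
    show ?thesis
    proof (cases "SX = SY")
      case False
      have "inj_on (\<lambda>u. if u = x then SX else if u = y then SY else g u) V"
        by (rule inj_combine[OF injg VW xW yW xy _ _ False]) (use gneg1 SXnn SYnn in fastforce)+
      then have ijx: ?this .
      show ?thesis by (rule GENi[where \<epsilon> = True, OF pv0 _ _ ijx]) (simp_all add: sum0x sum0y xyE)
    next
      case True
      note eq0 = True
      show ?thesis
      proof (cases "C = {}")
        case False
        then obtain c0 where c0: "c0 \<in> C" by blast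
        have c0A: "c0 \<in> A" and c0Y: "c0 \<in> Y" using c0 unfolding C_def by auto
        define privZ where "privZ w = (if w \<in> A \<and> w \<noteq> c0 then x else y)" for w
        have pvZ: "\<forall>w\<in>W. privZ w \<in> {x, y} \<and> {w, privZ w} \<in> E"
        proof
          fix w assume "w \<in> W"
          show "privZ w \<in> {x, y} \<and> {w, privZ w} \<in> E"
          proof (cases "w \<in> A \<and> w \<noteq> c0")
            case True then show ?thesis unfolding privZ_def using inA by simp
          next
            case False then have "w \<in> Y" using WAY \<open>w \<in> W\<close> c0Y by auto
            moreover have "privZ w = y" unfolding privZ_def by (rule if_not_P[OF False])
            ultimately show ?thesis using inY by simp
          qed
        qed
        define SXZ where "SXZ = (\<Sum>a\<in>A. int (if privZ a = x then p a else lam a))"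
        define SYZ where "SYZ = (\<Sum>w\<in>Y. int (if privZ w = y then p w else lam w))"
        have pz: "privZ c0 = y" unfolding privZ_def by simp
        have "SXZ = int (if privZ c0 = x then p c0 else lam c0) + (\<Sum>a\<in>A - {c0}. int (if privZ a = x then p a else lam a))"
          unfolding SXZ_def by (rule sum.remove[OF finA c0A])
        then have "SXZ = int (lam c0) + (\<Sum>a\<in>A - {c0}. int (if privZ a = x then p a else lam a))"
          using pz xy by simp
        moreover have "(\<Sum>a\<in>A - {c0}. int (if privZ a = x then p a else lam a)) = (\<Sum>a\<in>A - {c0}. int (p a))"
          unfolding privZ_def by (rule sum.cong) auto
        moreover have "SX = int (p c0) + (\<Sum>a\<in>A - {c0}. int (p a))"
          unfolding SX_def by (rule sum.remove[OF finA c0A])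
        ultimately have SXZ: "SXZ = SX - int (p c0) + int (lam c0)" by simp
        have "SYZ = int (if privZ c0 = y then p c0 else lam c0) + (\<Sum>w\<in>Y - {c0}. int (if privZ w = y then p w else lam w))"
          unfolding SYZ_def by (rule sum.remove[OF finY c0Y])
        then have "SYZ = int (p c0) + (\<Sum>w\<in>Y - {c0}. int (if privZ w = y then p w else lam w))"
          using pz by simp
        moreover have "(\<Sum>w\<in>Y - {c0}. int (if privZ w = y then p w else lam w)) =
                       (\<Sum>w\<in>Y - {c0}. int (if w \<in> A then lam w else p w))"
          unfolding privZ_def using xy by (intro sum.cong) auto
        moreover have "SY = int (if c0 \<in> A then lam c0 else p c0) + (\<Sum>w\<in>Y - {c0}. int (if w \<in> A then lam w else p w))"
          unfolding SY_def by (rule sum.remove[OF finY c0Y])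
        then have "SY = int (lam c0) + (\<Sum>w\<in>Y - {c0}. int (if w \<in> A then lam w else p w))"
          using c0A by simp
        ultimately have SYZ: "SYZ = SY + int (p c0) - int (lam c0)" by simp
        have "lam c0 < p c0" using lamb(2)[OF c0] pge(1)[of c0] c0A AW by force
        then have ne: "SXZ \<noteq> SYZ" using SXZ SYZ eq0 by simp
        have "SXZ \<ge> 0" unfolding SXZ_def by (rule sum_nonneg) simp
        moreover have "SYZ \<ge> 0" unfolding SYZ_def by (rule sum_nonneg) simp
        ultimately have "inj_on (\<lambda>u. if u = x then SXZ else if u = y then SYZ else g u) V"
          by (intro inj_combine[OF injg VW xW yW xy _ _ ne]) (use gneg1 in fastforce)+
        then have ijx: ?this .
        show ?thesis by (rule GENi[where \<epsilon> = True, OF pvZ _ _ ijx]) (simp_all add: SXZ_def SYZ_def xyE)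
      next
        case True
        note C0 = True
        have hn0: "hn = 0" unfolding hn_def using False by simp
        have Lf: "L = f" unfolding L_def hn0 C0 by simp
        have AY0: "A \<inter> Y = {}" using C0 unfolding C_def .
        have cW: "card W = card A + card Y" using cardW C0 by simp
        have cE': "card E = f + card A + card Y" using cE Lf cW by simp
        have NxA: "nbhd E x = A" unfolding A_def using yNx False by auto
        have NyY: "nbhd E y = Y" unfolding Y_def using xNy False by auto
        have A4: "card A \<ge> 4"
        proof -
          have "nbhd E x \<inter> closed_nbhd E y = {}"
            unfolding closed_nbhd_def NxA NyY using AY0 by (auto simp: A_def)
          then have "degree E x \<ge> 4" using hyp by simp
          then show ?thesis using degx False by simp
        qed
        then have Ane: "A \<noteq> {}" by auto
        have SYp: "SY = (\<Sum>w\<in>Y. int (p w))" unfolding SY_def using AY0 by (intro sum.cong) auto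
        have SXlow: "SX \<ge> int (card A) * int (f + 1)"
        proof -
          have "of_nat (card A) * int (f + 1) \<le> (\<Sum>a\<in>A. int (p a))"
            by (rule sum_bounded_below) (use pge AW Lf in force)
          then show ?thesis unfolding SX_def by simp
        qed
        have f1: "f \<ge> 1"
        proof (rule ccontr)
          assume "\<not> f \<ge> 1"
          then have f0: "f = 0" by simp
          then have "F = {}" using finF unfolding f_def by simp
          then have ev0: "ev F hF0 lF0 u = 0" for u unfolding ev_def by simp
          have "p b < p a" if b: "b \<in> Y" and a: "a \<in> A" for a b
          proof -
            have "b \<notin> A" using b AY0 by auto
            then have "\<kappa> b > \<kappa> a" unfolding \<kappa>_def s1_def using a ev0 C0 by simp
            then show ?thesis using pord b a YW AW by blast
          qed
          show False
          proof (cases "Y = {}")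
            case True
            then have "SY = 0" unfolding SY_def by simp
            moreover obtain a where "a \<in> A" using Ane by blast
            then have "SX \<ge> int (p a)" using SXge by blast
            moreover have "p a \<ge> 1" using pge \<open>a \<in> A\<close> AW by force
            ultimately show False using eq0 by simp
          next
            case False
            define \<mu> where "\<mu> = Min (p ` A)"
            have "\<mu> \<in> p ` A" unfolding \<mu>_def using finA Ane by simp
            then obtain a0 where a0: "a0 \<in> A" "p a0 = \<mu>" by auto
            have mu: "\<mu> \<le> p a" if "a \<in> A" for a unfolding \<mu>_def using finA that by simp
            have "SY \<le> int (card Y) * (int \<mu> - 1)"
            proof -
              have "(\<Sum>w\<in>Y. int (p w)) \<le> of_nat (card Y) * (int \<mu> - 1)"
                by (rule sum_bounded_above) (use \<open>\<And>a b. \<lbrakk>b \<in> Y; a \<in> A\<rbrakk> \<Longrightarrow> p b < p a\<close> a0 in force)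
              then show ?thesis using SYp by simp
            qed
            moreover have "SX \<ge> int (card A) * int \<mu>"
            proof -
              have "of_nat (card A) * int \<mu> \<le> (\<Sum>a\<in>A. int (p a))"
                by (rule sum_bounded_below) (use mu in force)
              then show ?thesis unfolding SX_def by simp
            qed
            moreover have "card Y \<ge> 1" using False finY by (simp add: Suc_le_eq card_gt_0_iff)
            moreover have "int (card Y) * (int \<mu> - 1) < int (card Y) * int \<mu>"
              using \<open>card Y \<ge> 1\<close> by (simp add: algebra_simps)
            moreover have "int (card Y) * int \<mu> \<le> int (card A) * int \<mu>"
              using YA by (simp add: mult_right_mono)
            ultimately show False using eq0 by linarith
          qed
        qed
        have Y2: "card Y \<ge> 2"
        proof (rule ccontr)
          assume "\<not> card Y \<ge> 2"
          then have "card Y = 0 \<or> card Y = 1" by auto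
          then show False
          proof
            assume "card Y = 0"
            then have "Y = {}" using finY by simp
            then have "SY = 0" unfolding SY_def by simp
            moreover have "SX \<ge> int (card A) * int (f + 1)" using SXlow .
            moreover have "int (card A) * int (f + 1) > 0" using A4 by simp
            ultimately show False using eq0 by linarith
          next
            assume "card Y = 1"
            then obtain b where "Y = {b}" by (auto simp: card_Suc_eq)
            then have "SY = int (p b)" using SYp by simp
            moreover have "p b \<le> card E" using pge \<open>Y = {b}\<close> YW by auto
            moreover have m: "int (card A) * int f \<ge> 4 * int f" using A4 by (simp add: mult_right_mono)
            moreover have "int (card A) * int (f + 1) = int (card A) * int f + int (card A)"
              by (simp add: distrib_left)
            moreover have "int (card E) = int f + int (card A) + 1" using cE' \<open>card Y = 1\<close> by simp
            ultimately show False using eq0 SXlow f1 by linarith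
          qed
        qed
        \<comment> \<open>the parity construction\<close>
        define \<sigma> where "\<sigma> k = (if k = f then f + 1 else k)" for k :: nat
        define lF' where "lF' e = \<sigma> (lF0 e)" for e
        define LF' where "LF' = {1..f + 1} - {f}"
        have bs: "bij_betw \<sigma> {1..f} LF'"
        proof (rule bij_betw_imageI)
          show "inj_on \<sigma> {1..f}" unfolding \<sigma>_def by (rule inj_onI) (auto split: if_splits)
          show "\<sigma> ` {1..f} = LF'"
          proof
            show "\<sigma> ` {1..f} \<subseteq> LF'" unfolding \<sigma>_def LF'_def using f1 by auto
            show "LF' \<subseteq> \<sigma> ` {1..f}"
            proof
              fix k assume k: "k \<in> LF'"
              show "k \<in> \<sigma> ` {1..f}"
              proof (cases "k = f + 1")
                case True
                then have "k = \<sigma> f" unfolding \<sigma>_def by simp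
                then show ?thesis using f1 by auto
              next
                case False
                then have "k \<in> {1..f}" "k \<noteq> f" using k unfolding LF'_def by auto
                then have "k = \<sigma> k" unfolding \<sigma>_def by simp
                then show ?thesis using \<open>k \<in> {1..f}\<close> by blast
              qed
            qed
          qed
        qed
        have blF': "bij_betw lF' F LF'"
        proof -
          have "bij_betw (\<sigma> \<circ> lF0) F LF'" by (rule bij_betw_trans[OF L1(2) bs])
          then show ?thesis unfolding lF'_def comp_def .
        qed
        have evF': "ev F hF0 lF' u \<le> int f + 1" for u
        proof -
          have d: "(if u \<in> e then (if hF0 e = u then int (lF' e) else - int (lF' e)) else 0)
                 \<le> (if u \<in> e then (if hF0 e = u then int (lF0 e) else - int (lF0 e)) else 0) + (if lF0 e = f then 1 else 0)"
            for e unfolding lF'_def \<sigma>_def by auto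
          have "ev F hF0 lF' u \<le> (\<Sum>e\<in>F. (if u \<in> e then (if hF0 e = u then int (lF0 e) else - int (lF0 e)) else 0) + (if lF0 e = f then 1 else 0))"
            unfolding ev_def by (rule sum_mono) (rule d)
          also have "\<dots> = ev F hF0 lF0 u + (\<Sum>e\<in>F. if lF0 e = f then 1 else 0)"
            unfolding ev_def by (simp add: sum.distrib)
          also have "(\<Sum>e\<in>F. if lF0 e = f then 1 else 0) = int (card {e\<in>F. lF0 e = f})"
            using finF by (simp add: sum.If_cases Int_def)
          also have "card {e\<in>F. lF0 e = f} \<le> 1"
          proof -
            have "inj_on lF0 F" using L1(2) unfolding bij_betw_def by simp
            then have "\<forall>a1\<in>{e\<in>F. lF0 e = f}. \<forall>a2\<in>{e\<in>F. lF0 e = f}. a1 = a2" unfolding inj_on_def by auto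
            then show ?thesis using card_le_Suc0_iff_eq[of "{e\<in>F. lF0 e = f}"] finF by simp
          qed
          finally show ?thesis using L1(3)[rule_format, of u] by simp
        qed
        define \<kappa>' where "\<kappa>' u = 2 * ev F hF0 lF' u + (if u \<in> A then 0 else 1)" for u
        define Q' where "Q' = insert f {f + 2..card E}"
        have cQ': "card Q' = card W"
        proof -
          have "f \<notin> {f + 2..card E}" by simp
          then have "card Q' = Suc (card {f + 2..card E})" unfolding Q'_def by simp
          then show ?thesis using cE' cW A4 by simp
        qed
        obtain p' where p'Q: "bij_betw p' W Q'" and p'ord: "\<forall>u\<in>W. \<forall>v\<in>W. \<kappa>' u > \<kappa>' v \<longrightarrow> p' u < p' v"
          using sort_lemma[OF finW _ cQ', of \<kappa>'] unfolding Q'_def by auto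
        have p'r: "p' w \<in> Q'" if "w \<in> W" for w using p'Q that unfolding bij_betw_def by auto
        have p'ge: "p' w \<ge> f" "p' w \<ge> 1" if "w \<in> W" for w using p'r[OF that] f1 unfolding Q'_def by auto
        have injp': "inj_on p' W" using p'Q unfolding bij_betw_def by simp
        define g' where "g' u = ev F hF0 lF' u - int (p' u) - (if u \<in> C then int (lam u) else 0)" for u
        have injg': "inj_on g' W"
        proof -
          have "inj_on (\<lambda>u. ev F hF0 lF' u - int (p' u)) W"
            by (rule sorted_inj[OF p'ord injp']) (auto simp: \<kappa>'_def)
          then show ?thesis unfolding g'_def using C0 by simp
        qed
        have g'le: "g' w \<le> 1" if "w \<in> W" for w unfolding g'_def using evF'[of w] p'ge[OF that] C0 by simp
        define SX' where "SX' = (\<Sum>a\<in>A. int (p' a))"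
        define SY' where "SY' = (\<Sum>w\<in>Y. int (p' w))"
        have SX'3: "SX' \<ge> 3"
        proof -
          have "\<not> (\<forall>a1\<in>A. \<forall>a2\<in>A. a1 = a2)" using card_le_Suc0_iff_eq[OF finA] A4 by linarith
          then obtain a1 a2 where "a1 \<in> A" "a2 \<in> A" "a1 \<noteq> a2" by blast
          then show ?thesis unfolding SX'_def
            by (intro sum_ge_two[OF finA]) (use injp' AW p'ge in \<open>auto intro: inj_on_subset\<close>)
        qed
        have SY'3: "SY' \<ge> 3"
        proof -
          have "\<not> (\<forall>a1\<in>Y. \<forall>a2\<in>Y. a1 = a2)" using card_le_Suc0_iff_eq[OF finY] Y2 by linarith
          then obtain a1 a2 where "a1 \<in> Y" "a2 \<in> Y" "a1 \<noteq> a2" by blast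
          then show ?thesis unfolding SY'_def
            by (intro sum_ge_two[OF finY]) (use injp' YW p'ge in \<open>auto intro: inj_on_subset\<close>)
        qed
        have sumW: "(\<Sum>w\<in>W. int (q w)) = (\<Sum>a\<in>A. int (q a)) + (\<Sum>w\<in>Y. int (q w))" for q :: "'a \<Rightarrow> nat"
          unfolding WAY by (rule sum.union_disjoint[OF finA finY AY0])
        have cEf: "card E \<ge> f + 2" using cE' A4 by simp
        have "(\<Sum>w\<in>W. int (p w)) = (\<Sum>k\<in>Q. int k)" by (rule sum.reindex_bij_betw[OF pQ])
        also have "Q = insert (f + 1) {f + 2..card E}" unfolding Q_def Lf using cEf by auto
        also have "(\<Sum>k\<in>insert (f + 1) {f + 2..card E}. int k) = int (f + 1) + (\<Sum>k\<in>{f + 2..card E}. int k)"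
          by simp
        finally have sQ: "SX + SY = int (f + 1) + (\<Sum>k\<in>{f + 2..card E}. int k)"
          using sumW[of p] SYp unfolding SX_def by simp
        have "(\<Sum>w\<in>W. int (p' w)) = (\<Sum>k\<in>Q'. int k)" by (rule sum.reindex_bij_betw[OF p'Q])
        also have "\<dots> = int f + (\<Sum>k\<in>{f + 2..card E}. int k)" unfolding Q'_def by simp
        finally have sQ': "SX' + SY' = int f + (\<Sum>k\<in>{f + 2..card E}. int k)"
          using sumW[of p'] unfolding SX'_def SY'_def by simp
        have neq': "SX' \<noteq> SY'"
        proof
          assume "SX' = SY'"
          then have "2 * SX' = 2 * SX - 1" using sQ sQ' eq0 by simp
          then show False by presburger
        qed
        have ij': "inj_on (\<lambda>u. if u = x then SX' else if u = y then SY' else g' u) V"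
          by (rule inj_combine[OF injg' VW xW yW xy _ _ neq']) (use g'le SX'3 SY'3 in fastforce)+
        have rLF': "LF' \<subseteq> {1..card E}" unfolding LF'_def using cEf by auto
        have rQ': "Q' \<subseteq> {1..card E}" unfolding Q'_def using f1 cEf by auto
        have LC0: "LC = {}" unfolding LC_def L_def hn0 C0 by simp
        have ijG: "inj_on (\<lambda>u. if u = x then
                (\<Sum>a\<in>A. int (if priv0 a = x then p' a else lam a)) + (if {x, y} \<in> E then (if True then - int (f + 1) else int (f + 1)) else 0)
              else if u = y then
                (\<Sum>w\<in>Y. int (if priv0 w = y then p' w else lam w)) + (if {x, y} \<in> E then (if True then int (f + 1) else - int (f + 1)) else 0)
              else ev F hF0 lF' u - int (p' u) - (if u \<in> C then int (lam u) else 0)) V"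
        proof -
          have e1: "(\<Sum>a\<in>A. int (if priv0 a = x then p' a else lam a)) = SX'"
            unfolding SX'_def priv0_def by (rule sum.cong) auto
          have e2: "(\<Sum>w\<in>Y. int (if priv0 w = y then p' w else lam w)) = SY'"
            unfolding SY'_def priv0_def using AY0 xy by (intro sum.cong) auto
          show ?thesis using ij' unfolding e1 e2 g'_def using xyE by (simp cong: if_cong)
        qed
        show ?thesis
        proof (rule GEN[OF sg xV yV xy cover W_def A_def Y_def C_def F_def L1(1) blF' p'Q lam pv0 rLF' rQ' _ _ _ _ _ ijG])
          show "LC \<subseteq> {1..card E}" using LC0 by simp
          show "f + 1 \<in> {1..card E} \<and> f + 1 \<notin> LF' \<and> f + 1 \<notin> LC \<and> f + 1 \<notin> Q'" if "{x, y} \<in> E"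
            using that xyE by simp
          show "LF' \<inter> Q' = {}" unfolding LF'_def Q'_def by auto
          show "LF' \<inter> LC = {}" using LC0 by simp
          show "LC \<inter> Q' = {}" using LC0 by simp
        qed
      qed
    qed
  qed
qed

end
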